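(* Let $\mathcal G$ be a groupoid (standing conventions), let $M,N\in\mathbb N_+$, and let $(\epsilon_n)$ be a decreasing sequence of positive numbers with $\epsilon_n\to0$. Suppose $\mathcal G$ admits a Følner sequence $\mathcal S=(S_n)$ in which every $S_n$ is $(M,\epsilon_n)$-good and has $N$-controlled height. Then for every clopen $A\subseteq\mathcal G^{(0)}$, $$\frac1N\sup_{\mu\in M(\mathcal G)}\mu(A)\le\bar D^-_{\mathcal S}(A)\le\bar D^+_{\mathcal S}(A)\le\sup_{\mu\in M(\mathcal G)}\mu(A).$$ In particular, if $N=1$ then $\sup_{\mu\in M(\mathcal G)}\mu(A)=\bar D^-_{\mathcal S}(A)=\bar D^+_{\mathcal S}(A)$.
   Context: Standing conventions: a groupoid is a $\sigma$-compact, locally compact, Hausdorff, étale, ample groupoid $\mathcal G$ with compact unit space $\mathcal G^{(0)}$. For $A,B\subseteq\mathcal G$, $AB$ denotes composable products and $Au=\{a\in A:s(a)=u\}$. A multisection is a finite family $\{C_{i,j}:i,j\in F\}$ of bisections with $C_{i,j}C_{j,k}=C_{i,k}$ and pairwise disjoint levels $C_{i,i}\subseteq\mathcal G^{(0)}$. $M(\mathcal G)$ is the set of $\mathcal G$-invariant Borel probability measures on $\mathcal G^{(0)}$; conventions $\inf_\emptyset=+\infty$, $\sup_\emptyset=0$. A normal set is a compact open $S\subseteq\mathcal G$ together with compact open multisections $\{C^l_{i,j}:i,j\in F_l\}$, $l=1,\dots,m$, and indices $i_l\in F_l$ with $S=\bigcup_{l=1}^m\bigsqcup_{i\in F_l}C^l_{i,i_l}$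 and $\mathcal G^{(0)}=\bigsqcup_{l=1}^mC^l_{i_l,i_l}$. A Følner sequence is a sequence $(S_n)$ of normal sets with $\sup_{u}|KS_nu\setminus S_nu|/|S_nu|\to0$ for every compact $K$. Height $h(S)=\min_l|F_l|$; $N$-controlled height means $|F_l|\le N h(S)$ for all $l$. $S$ is $(M,\epsilon)$-good if there are injections $f_l:\{0,\dots,h(S)-1\}\to F_l$ with $f_l(0)=i_l$ such that (a) $\inf_{\mu\in M(\mathcal G)}\mu(\bigcup_{l=1}^mC^l_{f_l(k),f_l(k)})\ge1-\epsilon$ for all $0\le k\le h(S)-1$, and (b) there is $L\subseteq\{1,\dots,m\}$ with $\inf_{\mu\in M(\mathcal G)}\mu(\bigsqcup_{l\in L}C^l_{i_l,i_l})>1-\epsilon$ such that for each $k$ the family $\{C^l_{f_l(k),f_l(k)}:l\in L\}$ is a union of at most $M$ subfamilies of pairwise disjoint sets. Densities: $\bar D^+_{\mathcal S}(A)=\limsup_{n}\sup_{u\in\mathcal G^{(0)}}\frac{1}{|S_nu|}\sum_{\gamma\in S_nu}1_A(r(\gamma))$ and $\bar D^-_{\mathcal S}(A)=\liminf_{n}\sup_{u\in\mathcal G^{(0)}}\frac{1}{|S_nu|}\sum_{\gamma\in S_nu}1_A(r(\gamma))$. *)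

theory Defs
  imports "HOL-Analysis.Analysis" "HOL-Probability.Probability"
begin

section \<open>Topological groupoids (all elements of the type are arrows)\<close>

record 'a groupoid =
  gsrc :: "'a \<Rightarrow> 'a"
  grng :: "'a \<Rightarrow> 'a"
  gmul :: "'a \<Rightarrow> 'a \<Rightarrow> 'a"
  ginv :: "'a \<Rightarrow> 'a"

definition units :: "('a, 'b) groupoid_scheme \<Rightarrow> 'a set" where
  "units G = range (gsrc G)"

definition is_groupoid :: "('a, 'b) groupoid_scheme \<Rightarrow> bool" where
  "is_groupoid G \<longleftrightarrow>
     (\<forall>g. gsrc G (gsrc G g) = gsrc G g \<and> grng G (gsrc G g) = gsrc G g
        \<and> gsrc G (grng G g) = grng G g \<and> grng G (grng G g) = grng G g) \<and>
     (\<forall>g h. gsrc G g = grng G h \<longrightarrow>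
        gsrc G (gmul G g h) = gsrc G h \<and> grng G (gmul G g h) = grng G g) \<and>
     (\<forall>g h k. gsrc G g = grng G h \<and> gsrc G h = grng G k \<longrightarrow>
        gmul G (gmul G g h) k = gmul G g (gmul G h k)) \<and>
     (\<forall>g. gmul G (grng G g) g = g \<and> gmul G g (gsrc G g) = g) \<and>
     (\<forall>g. gsrc G (ginv G g) = grng G g \<and> grng G (ginv G g) = gsrc G g
        \<and> gmul G g (ginv G g) = grng G g \<and> gmul G (ginv G g) g = gsrc G g)"

definition local_homeo :: "('a::topological_space \<Rightarrow> 'a) \<Rightarrow> bool" where
  "local_homeo f \<longleftrightarrow> (\<forall>x. \<exists>U g. open U \<and> x \<in> U \<and> open (f ` U) \<and> homeomorphism U (f ` U) f g)"

definition setmul :: "('a, 'b) groupoid_scheme \<Rightarrow> 'a set \<Rightarrow> 'a set \<Rightarrow> 'a set" where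
  "setmul G A B = {gmul G g h | g h. g \<in> A \<and> h \<in> B \<and> gsrc G g = grng G h}"

definition fibre :: "('a, 'b) groupoid_scheme \<Rightarrow> 'a set \<Rightarrow> 'a \<Rightarrow> 'a set" where
  "fibre G A u = {a \<in> A. gsrc G a = u}"

definition bisection :: "('a::topological_space, 'b) groupoid_scheme \<Rightarrow> 'a set \<Rightarrow> bool" where
  "bisection G B \<longleftrightarrow> open B \<and> inj_on (gsrc G) B \<and> inj_on (grng G) B"

text \<open>Standing conventions: sigma-compact, locally compact, Hausdorff (type class),
  etale, ample topological groupoid with compact unit space.\<close>
definition ample_groupoid :: "('a::t2_space, 'b) groupoid_scheme \<Rightarrow> bool" where
  "ample_groupoid G \<longleftrightarrow> is_groupoid G \<and>
     continuous_on {(g, h). gsrc G g = grng G h} (\<lambda>(g, h). gmul G g h) \<and>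
     continuous_on UNIV (ginv G) \<and>
     (\<exists>K :: nat \<Rightarrow> 'a set. (\<forall>n. compact (K n)) \<and> (\<Union>n. K n) = UNIV) \<and>
     locally_compact_space (euclidean :: 'a topology) \<and>
     continuous_on UNIV (gsrc G) \<and> continuous_on UNIV (grng G) \<and>
     local_homeo (gsrc G) \<and> local_homeo (grng G) \<and>
     (\<forall>U x. open U \<and> x \<in> U \<longrightarrow> (\<exists>B. bisection G B \<and> compact B \<and> x \<in> B \<and> B \<subseteq> U)) \<and>
     compact (units G)"

definition inv_measures :: "('a::topological_space, 'b) groupoid_scheme \<Rightarrow> 'a measure set" where
  "inv_measures G = {\<mu>. prob_space \<mu> \<and> space \<mu> = units G \<and>
      sets \<mu> = sets (restrict_space borel (units G)) \<and>
      (\<forall>B. bisection G B \<longrightarrow> emeasure \<mu> (gsrc G ` B) = emeasure \<mu> (grng G ` B))}"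

text \<open>Supremum with the convention sup of the empty set = 0 (all values are nonnegative).\<close>
definition sup_measure :: "('a::topological_space, 'b) groupoid_scheme \<Rightarrow> 'a set \<Rightarrow> ereal" where
  "sup_measure G A = Sup (insert 0 ((\<lambda>\<mu>. ereal (measure \<mu> A)) ` inv_measures G))"

text \<open>Infimum with the convention inf of the empty set = +infinity.\<close>
definition inf_measure :: "('a::topological_space, 'b) groupoid_scheme \<Rightarrow> 'a set \<Rightarrow> ereal" where
  "inf_measure G A = (INF \<mu>\<in>inv_measures G. ereal (measure \<mu> A))"

definition compact_open_multisection ::
  "('a::topological_space, 'b) groupoid_scheme \<Rightarrow> nat set \<Rightarrow> (nat \<Rightarrow> nat \<Rightarrow> 'a set) \<Rightarrow> bool" where
  "compact_open_multisection G F C \<longleftrightarrow> finite F \<and>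
     (\<forall>i\<in>F. \<forall>j\<in>F. bisection G (C i j) \<and> compact (C i j)) \<and>
     (\<forall>i\<in>F. \<forall>j\<in>F. \<forall>k\<in>F. setmul G (C i j) (C j k) = C i k) \<and>
     (\<forall>i\<in>F. C i i \<subseteq> units G) \<and>
     (\<forall>i\<in>F. \<forall>j\<in>F. i \<noteq> j \<longrightarrow> C i i \<inter> C j j = {})"

text \<open>Data of a normal set: number m of multisections (indexed by l = 1..m),
  index sets F l, multisections C l, and base indices i l.\<close>
record 'a normal_data =
  nd_m :: nat
  nd_F :: "nat \<Rightarrow> nat set"
  nd_C :: "nat \<Rightarrow> nat \<Rightarrow> nat \<Rightarrow> 'a set"
  nd_i :: "nat \<Rightarrow> nat"

definition nd_set :: "'a normal_data \<Rightarrow> 'a set" where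
  "nd_set D = (\<Union>l\<in>{1..nd_m D}. \<Union>i\<in>nd_F D l. nd_C D l i (nd_i D l))"

definition normal_set :: "('a::topological_space, 'b) groupoid_scheme \<Rightarrow> 'a normal_data \<Rightarrow> bool" where
  "normal_set G D \<longleftrightarrow>
     (\<forall>l\<in>{1..nd_m D}. compact_open_multisection G (nd_F D l) (nd_C D l) \<and> nd_i D l \<in> nd_F D l) \<and>
     units G = (\<Union>l\<in>{1..nd_m D}. nd_C D l (nd_i D l) (nd_i D l)) \<and>
     (\<forall>l\<in>{1..nd_m D}. \<forall>l'\<in>{1..nd_m D}. l \<noteq> l' \<longrightarrow>
        nd_C D l (nd_i D l) (nd_i D l) \<inter> nd_C D l' (nd_i D l') (nd_i D l') = {})"

definition folner :: "('a::topological_space, 'b) groupoid_scheme \<Rightarrow> (nat \<Rightarrow> 'a normal_data) \<Rightarrow> bool" where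
  "folner G S \<longleftrightarrow> (\<forall>n. normal_set G (S n)) \<and>
     (\<forall>K. compact K \<longrightarrow>
        (\<lambda>n. SUP u\<in>units G. real (card (fibre G (setmul G K (nd_set (S n))) u - fibre G (nd_set (S n)) u))
                             / real (card (fibre G (nd_set (S n)) u))) \<longlonglongrightarrow> 0)"

definition height :: "'a normal_data \<Rightarrow> nat" where
  "height D = Min ((\<lambda>l. card (nd_F D l)) ` {1..nd_m D})"

definition controlled_height :: "nat \<Rightarrow> 'a normal_data \<Rightarrow> bool" where
  "controlled_height N D \<longleftrightarrow> (\<forall>l\<in>{1..nd_m D}. card (nd_F D l) \<le> N * height D)"

definition good :: "('a::topological_space, 'b) groupoid_scheme \<Rightarrow> nat \<Rightarrow> real \<Rightarrow> 'a normal_data \<Rightarrow> bool" where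
  "good G M \<epsilon> D \<longleftrightarrow> (\<exists>f :: nat \<Rightarrow> nat \<Rightarrow> nat.
     (\<forall>l\<in>{1..nd_m D}. inj_on (f l) {0..<height D} \<and> f l ` {0..<height D} \<subseteq> nd_F D l
        \<and> f l 0 = nd_i D l) \<and>
     (\<forall>k<height D. inf_measure G (\<Union>l\<in>{1..nd_m D}. nd_C D l (f l k) (f l k)) \<ge> ereal (1 - \<epsilon>)) \<and>
     (\<exists>L \<subseteq> {1..nd_m D}.
        inf_measure G (\<Union>l\<in>L. nd_C D l (nd_i D l) (nd_i D l)) > ereal (1 - \<epsilon>) \<and>
        (\<forall>k<height D. \<exists>c :: nat \<Rightarrow> nat. (\<forall>l\<in>L. c l < M) \<and>
           (\<forall>l\<in>L. \<forall>l'\<in>L. l \<noteq> l' \<and> c l = c l' \<longrightarrow>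
              nd_C D l (f l k) (f l k) \<inter> nd_C D l' (f l' k) (f l' k) = {}))))"

definition dens_avg :: "('a, 'b) groupoid_scheme \<Rightarrow> 'a normal_data \<Rightarrow> 'a set \<Rightarrow> 'a \<Rightarrow> real" where
  "dens_avg G D A u = (\<Sum>\<gamma>\<in>fibre G (nd_set D) u. indicator A (grng G \<gamma>)) / real (card (fibre G (nd_set D) u))"

text \<open>sup over units with the convention sup of empty set = 0 (values are nonnegative).\<close>
definition dens_sup :: "('a, 'b) groupoid_scheme \<Rightarrow> 'a normal_data \<Rightarrow> 'a set \<Rightarrow> ereal" where
  "dens_sup G D A = Sup (insert 0 ((\<lambda>u. ereal (dens_avg G D A u)) ` units G))"

definition upper_density :: "('a, 'b) groupoid_scheme \<Rightarrow> (nat \<Rightarrow> 'a normal_data) \<Rightarrow> 'a set \<Rightarrow> ereal" where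
  "upper_density G S A = limsup (\<lambda>n. dens_sup G (S n) A)"

definition lower_density :: "('a, 'b) groupoid_scheme \<Rightarrow> (nat \<Rightarrow> 'a normal_data) \<Rightarrow> 'a set \<Rightarrow> ereal" where
  "lower_density G S A = liminf (\<lambda>n. dens_sup G (S n) A)"

end

theory Submission
  imports Defs
begin


locale comeas =
  fixes X :: "'a::t2_space set" and p :: "'a set \<Rightarrow> real"
  assumes cX: "compact X" and oX: "open X"
  and basis: "\<And>U x. open U \<Longrightarrow> x \<in> U \<Longrightarrow> x \<in> X \<Longrightarrow> \<exists>K. compact K \<and> open K \<and> K \<subseteq> X \<and> x \<in> K \<and> K \<subseteq> U"
  and pos: "\<And>K. p K \<ge> 0"
  and add: "\<And>K K'. K \<inter> K' = {} \<Longrightarrow> p (K \<union> K') = p K + p K'"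
  and pX: "p X = 1"
begin

definition "CO = {K. compact K \<and> open K \<and> K \<subseteq> X}"
definition "lam V = Sup (p ` {K\<in>CO. K \<subseteq> V})"
definition "om E = Inf (lam ` {V. open V \<and> E \<subseteq> V})"

lemma p_empty: "p {} = 0" using add[of "{}" "{}"] by simp

lemma p_mono: "K \<subseteq> K' \<Longrightarrow> p K \<le> p K'"
proof -
  assume "K \<subseteq> K'"
  then have "K' = K \<union> (K' - K)" by auto
  then have "p K' = p K + p (K' - K)" using add[of K "K' - K"] by auto
  then show ?thesis using pos[of "K' - K"] by simp
qed

lemma p_le1: "K \<subseteq> X \<Longrightarrow> p K \<le> 1" using p_mono pX by metis

lemma co_empty: "{} \<in> CO" by (simp add: CO_def)
lemma co_X: "X \<in> CO" using cX oX by (simp add: CO_def)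
lemma co_Un: "K \<in> CO \<Longrightarrow> K' \<in> CO \<Longrightarrow> K \<union> K' \<in> CO"
  by (auto simp: CO_def)
lemma co_diff: "K \<in> CO \<Longrightarrow> K' \<in> CO \<Longrightarrow> K - K' \<in> CO"
proof -
  assume a: "K \<in> CO" "K' \<in> CO"
  have "closed K'" using a by (simp add: CO_def compact_imp_closed)
  then have "compact (K \<inter> - K')" using a by (simp add: CO_def compact_Int_closed open_Compl closed_Compl)
  moreover have "open (K \<inter> - K')" using a \<open>closed K'\<close> by (auto simp: CO_def)
  ultimately show ?thesis using a by (auto simp: CO_def Diff_eq)
qed

lemma co_UN: "finite D \<Longrightarrow> (\<And>x. x\<in>D \<Longrightarrow> W x \<in> CO) \<Longrightarrow> \<Union>(W ` D) \<in> CO"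
  by (auto simp: CO_def)

lemma bdd: "bdd_above (p ` {K\<in>CO. K \<subseteq> V})"
  by (rule bdd_aboveI[of _ 1]) (auto simp: CO_def intro: p_le1)

lemma lam_ge: "K \<in> CO \<Longrightarrow> K \<subseteq> V \<Longrightarrow> p K \<le> lam V"
  unfolding lam_def by (rule cSup_upper) (auto intro: bdd)

lemma lam_le: "(\<And>K. K\<in>CO \<Longrightarrow> K \<subseteq> V \<Longrightarrow> p K \<le> c) \<Longrightarrow> lam V \<le> c"
  unfolding lam_def by (rule cSup_least) (use co_empty in auto)

lemma lam_nonneg: "0 \<le> lam V" using lam_ge[OF co_empty, of V] p_empty by simp
lemma lam_le1: "lam V \<le> 1" by (rule lam_le) (auto simp: CO_def intro: p_le1)
lemma lam_mono: "V \<subseteq> W \<Longrightarrow> lam V \<le> lam W"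
  by (rule lam_le) (rule lam_ge, auto)

lemma lam_approx: assumes "e > 0" shows "\<exists>K\<in>CO. K \<subseteq> V \<and> lam V < p K + e"
proof -
  have "lam V - e < Sup (p ` {K\<in>CO. K \<subseteq> V})" using assms by (simp add: lam_def)
  then obtain y where "y \<in> p ` {K\<in>CO. K \<subseteq> V}" "lam V - e < y"
    using less_cSupD[of "p ` {K\<in>CO. K \<subseteq> V}"] co_empty by blast
  then show ?thesis by force
qed

lemma lam_co: "K \<in> CO \<Longrightarrow> lam K = p K"
  by (meson antisym lam_ge lam_le order_refl p_mono)

lemma split:
  assumes K: "K \<in> CO" and V: "open V" "open V'" and sub: "K \<subseteq> V \<union> V'"
  shows "\<exists>K1\<in>CO. K1 \<subseteq> V \<inter> K \<and> K - K1 \<subseteq> V'"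
proof -
  have cl: "closed (-V')" using V by auto
  have cC: "compact (K - V')" using K cl by (simp add: CO_def Diff_eq compact_Int_closed)
  have "\<forall>x\<in>K - V'. \<exists>W. compact W \<and> open W \<and> W \<subseteq> X \<and> x \<in> W \<and> W \<subseteq> V \<inter> K"
  proof
    fix x assume x: "x \<in> K - V'"
    then have "x \<in> V \<inter> K" "x \<in> X" using sub K by (auto simp: CO_def)
    moreover have "open (V \<inter> K)" using K V by (auto simp: CO_def)
    ultimately show "\<exists>W. compact W \<and> open W \<and> W \<subseteq> X \<and> x \<in> W \<and> W \<subseteq> V \<inter> K"
      using basis by blast
  qed
  then obtain W where W: "\<And>x. x \<in> K - V' \<Longrightarrow> compact (W x) \<and> open (W x) \<and> W x \<subseteq> X \<and> x \<in> W x \<and> W x \<subseteq> V \<inter> K"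
    by metis
  have "K - V' \<subseteq> \<Union>(W ` (K - V'))" using W by blast
  then obtain D where D: "D \<subseteq> K - V'" "finite D" "K - V' \<subseteq> \<Union>(W ` D)"
    using compactE_image[OF cC, of "K - V'" W] W by blast
  define K1 where "K1 = \<Union>(W ` D)"
  have Wco: "\<And>x. x \<in> D \<Longrightarrow> W x \<in> CO" using D W unfolding CO_def by blast
  have "K1 \<in> CO" unfolding K1_def
    by (rule co_UN) (use D Wco in auto)
  moreover have "K1 \<subseteq> V \<inter> K" unfolding K1_def using D W by blast
  moreover have "K - K1 \<subseteq> V'" using D by (auto simp: K1_def)
  ultimately show ?thesis by blast
qed

lemma fin_subadd:
  "K \<in> CO \<Longrightarrow> (\<And>i. open (V i)) \<Longrightarrow> K \<subseteq> (\<Union>i<(n::nat). V i) \<Longrightarrow> p K \<le> (\<Sum>i<n. lam (V i))"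
proof (induction n arbitrary: K)
  case 0 then show ?case using p_empty by simp
next
  case (Suc n)
  have "K \<subseteq> V n \<union> (\<Union>i<n. V i)" using Suc.prems by (auto simp: lessThan_Suc)
  then obtain K1 where K1: "K1 \<in> CO" "K1 \<subseteq> V n \<inter> K" "K - K1 \<subseteq> (\<Union>i<n. V i)"
    using split[OF Suc.prems(1), of "V n" "\<Union>i<n. V i"] Suc.prems by auto
  have "K = K1 \<union> (K - K1)" using K1 by auto
  then have "p K = p K1 + p (K - K1)" using add[of K1 "K - K1"] by auto
  also have "p K1 \<le> lam (V n)" using K1 by (intro lam_ge) auto
  also have "p (K - K1) \<le> (\<Sum>i<n. lam (V i))"
    using Suc.IH[OF co_diff[OF Suc.prems(1) K1(1)]] Suc.prems K1 by auto
  finally show ?case by simp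
qed

lemma ennreal_lam_le: "(\<And>K. K\<in>CO \<Longrightarrow> K \<subseteq> V \<Longrightarrow> ennreal (p K) \<le> c) \<Longrightarrow> ennreal (lam V) \<le> c"
proof (cases c)
  case (real r)
  assume h: "\<And>K. K\<in>CO \<Longrightarrow> K \<subseteq> V \<Longrightarrow> ennreal (p K) \<le> c"
  have "lam V \<le> r" by (rule lam_le) (use h real pos in auto)
  then show ?thesis using real by simp
qed simp

lemma lam_UN:
  assumes V: "\<And>i::nat. open (V i)"
  shows "ennreal (lam (\<Union>i. V i)) \<le> (\<Sum>i. ennreal (lam (V i)))"
proof (rule ennreal_lam_le)
  fix K assume K: "K \<in> CO" "K \<subseteq> (\<Union>i. V i)"
  then have "compact K" by (simp add: CO_def)
  then obtain D where D: "D \<subseteq> UNIV" "finite D" "K \<subseteq> \<Union>(V ` D)"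
    using compactE_image[of K UNIV V] K V by auto
  define n where "n = Suc (Max (insert 0 D))"
  have "\<forall>i\<in>D. i < n" using D by (auto simp: n_def less_Suc_eq_le)
  then have "K \<subseteq> (\<Union>i<n. V i)" using D by blast
  then have "p K \<le> (\<Sum>i<n. lam (V i))" using fin_subadd[OF K(1) V] by auto
  then have "ennreal (p K) \<le> ennreal (\<Sum>i<n. lam (V i))" by (rule ennreal_leI)
  also have "\<dots> = (\<Sum>i<n. ennreal (lam (V i)))"
    by (rule sum_ennreal[symmetric]) (simp add: lam_nonneg)
  also have "\<dots> \<le> (\<Sum>i. ennreal (lam (V i)))"
    by (rule sum_le_suminf) auto
  finally show "ennreal (p K) \<le> (\<Sum>i. ennreal (lam (V i)))" .
qed

lemma om_bdd: "bdd_below (lam ` {V. open V \<and> E \<subseteq> V})"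
  by (rule bdd_belowI[of _ 0]) (auto intro: lam_nonneg)

lemma om_le: "open V \<Longrightarrow> E \<subseteq> V \<Longrightarrow> om E \<le> lam V"
  unfolding om_def by (rule cInf_lower) (auto intro: om_bdd)

lemma om_ge: "(\<And>V. open V \<Longrightarrow> E \<subseteq> V \<Longrightarrow> c \<le> lam V) \<Longrightarrow> c \<le> om E"
  unfolding om_def by (rule cInf_greatest) auto

lemma om_nonneg: "0 \<le> om E" by (rule om_ge) (rule lam_nonneg)

lemma om_mono: "E \<subseteq> E' \<Longrightarrow> om E \<le> om E'"
  by (rule om_ge) (rule om_le, auto)

lemma om_open: "open V \<Longrightarrow> om V = lam V"
  by (meson antisym lam_mono om_ge om_le order_refl)

lemma om_approx: assumes "e > 0" shows "\<exists>V. open V \<and> E \<subseteq> V \<and> lam V < om E + e"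
proof -
  have "Inf (lam ` {V. open V \<and> E \<subseteq> V}) < om E + e" using assms by (simp add: om_def)
  then obtain y where "y \<in> lam ` {V. open V \<and> E \<subseteq> V}" "y < om E + e"
    using cInf_lessD[of "lam ` {V. open V \<and> E \<subseteq> V}"] by blast
  then show ?thesis by force
qed

lemma om_co: "K \<in> CO \<Longrightarrow> om K = p K"
  using om_open lam_co by (simp add: CO_def)

definition "f E = ennreal (om E)"

lemma f_cs: "f (\<Union>i. E i) \<le> (\<Sum>i. f (E i))"
proof (rule ennreal_le_epsilon)
  fix e :: real assume e: "0 < e"
  have "\<forall>i. \<exists>V. open V \<and> E i \<subseteq> V \<and> lam V < om (E i) + e / 2 ^ Suc i"
    using om_approx e by simp
  then obtain V where V: "\<And>i. open (V i) \<and> E i \<subseteq> V i \<and> lam (V i) < om (E i) + e / 2 ^ Suc i"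
    by metis
  have "f (\<Union>i. E i) \<le> ennreal (lam (\<Union>i. V i))"
    unfolding f_def using V by (intro ennreal_leI om_le) auto
  also have "\<dots> \<le> (\<Sum>i. ennreal (lam (V i)))" using lam_UN V by blast
  also have "\<dots> \<le> (\<Sum>i. f (E i) + ennreal (e / 2 ^ Suc i))"
  proof (intro suminf_le)
    fix i
    have "lam (V i) \<le> om (E i) + e / 2 ^ Suc i" using V[of i] by simp
    then have "ennreal (lam (V i)) \<le> ennreal (om (E i) + e / 2 ^ Suc i)" by (rule ennreal_leI)
    also have "\<dots> = f (E i) + ennreal (e / 2 ^ Suc i)"
      unfolding f_def using om_nonneg e by (intro ennreal_plus) auto
    finally show "ennreal (lam (V i)) \<le> f (E i) + ennreal (e / 2 ^ Suc i)" .
  qed auto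
  also have "\<dots> = (\<Sum>i. f (E i)) + (\<Sum>i. ennreal (e / 2 ^ Suc i))"
    by (rule suminf_add[symmetric]) auto
  also have "(\<Sum>i. ennreal (e / 2 ^ Suc i)) = ennreal e"
  proof (rule suminf_ennreal_eq)
    show "(\<lambda>i. e / 2 ^ Suc i) sums e"
      using power_half_series sums_mult[of "\<lambda>n. (1/2::real) ^ Suc n" 1 e] by (simp add: power_divide)
  qed (use e in auto)
  finally show "f (\<Union>i. E i) \<le> (\<Sum>i. f (E i)) + ennreal e" .
qed

lemma f_open_split:
  assumes S: "open S" and E: "E \<subseteq> X"
  shows "om (E \<inter> S) + om (E - S) \<le> om E"
proof -
  have *: "om (E \<inter> S) + om (E - S) \<le> om E + 3 * e" if e: "e > 0" for e
  proof -
    obtain U where U: "open U" "E \<subseteq> U" "lam U < om E + e" using om_approx e by blast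
    obtain K where K: "K \<in> CO" "K \<subseteq> U \<inter> S" "lam (U \<inter> S) < p K + e"
      using lam_approx e by blast
    have "closed K" using K by (simp add: CO_def compact_imp_closed)
    then have oUK: "open (U - K)" using U by auto
    obtain K' where K': "K' \<in> CO" "K' \<subseteq> U - K" "lam (U - K) < p K' + e"
      using lam_approx e by blast
    have "om (E \<inter> S) \<le> lam (U \<inter> S)" using U S by (intro om_le) auto
    moreover have "om (E - S) \<le> lam (U - K)" using U oUK K by (intro om_le) auto
    moreover have "p K + p K' \<le> lam U"
    proof -
      have "p K + p K' = p (K \<union> K')" using K' by (intro add[symmetric]) auto
      also have "\<dots> \<le> lam U" using K K' by (intro lam_ge co_Un) auto
      finally show ?thesis .
    qed
    ultimately show ?thesis using K K' U by linarith
  qed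
  show ?thesis
  proof (rule field_le_epsilon)
    fix e :: real assume "0 < e"
    then show "om (E \<inter> S) + om (E - S) \<le> om E + e" using *[of "e/3"] by simp
  qed
qed

lemma lam_empty: "lam {} = 0"
  using lam_nonneg[of "{}"] lam_le[of "{}" 0] p_empty by force

lemma exists_measure:
  "\<exists>\<mu>. prob_space \<mu> \<and> space \<mu> = X \<and> sets \<mu> = sets (restrict_space borel X) \<and>
       (\<forall>V. open V \<longrightarrow> V \<subseteq> X \<longrightarrow> measure \<mu> V = lam V)"
proof -
  have sa: "sigma_algebra X (Pow X)" by (rule sigma_algebra_Pow)
  have posf: "positive (Pow X) f"
    unfolding positive_def f_def using om_le[of "{}" "{}"] lam_empty om_nonneg[of "{}"] by simp
  have oms: "outer_measure_space (Pow X) f"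
    unfolding outer_measure_space_def
  proof (intro conjI posf)
    show "increasing (Pow X) f" unfolding increasing_def f_def
      by (auto intro!: ennreal_leI om_mono)
    show "countably_subadditive (Pow X) f" unfolding countably_subadditive_def
      using f_cs by blast
  qed
  define L where "L = lambda_system X (Pow X) f"
  have msL: "measure_space X L f"
    unfolding L_def by (rule sigma_algebra.caratheodory_lemma[OF sa oms])
  have sub: "subadditive (Pow X) f"
    by (rule ring_of_sets.countably_subadditive_subadditive[OF _ posf])
       (use sa oms in \<open>auto simp: outer_measure_space_def sigma_algebra_def algebra_def\<close>)
  have openL: "X \<inter> S \<in> L" if S: "open S" for S
    unfolding L_def lambda_system_def
  proof (safe)
    fix x assume x: "x \<subseteq> X"
    have e1: "X \<inter> S \<inter> x = x \<inter> S" and e2: "(X - X \<inter> S) \<inter> x = x - S" using x by auto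
    have "f (x \<inter> S) + f (x - S) = ennreal (om (x \<inter> S) + om (x - S))"
      unfolding f_def by (simp add: ennreal_plus om_nonneg)
    also have "\<dots> \<le> f x" unfolding f_def by (rule ennreal_leI) (rule f_open_split[OF S x])
    finally have le: "f (x \<inter> S) + f (x - S) \<le> f x" .
    have "x = (x \<inter> S) \<union> (x - S)" by auto
    then have "f x \<le> f (x \<inter> S) + f (x - S)"
      using subadditiveD[OF sub, of "x \<inter> S" "x - S"] x by auto
    with le show "f (X \<inter> S \<inter> x) + f ((X - X \<inter> S) \<inter> x) = f x" unfolding e1 e2 by simp
  qed
  define B where "B = sets (restrict_space borel X)"
  have B_eq: "B = sigma_sets X ((\<inter>) X ` {S. open S})"
  proof -
    have "B = (\<inter>) X ` sigma_sets UNIV {S. open S}"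
      unfolding B_def sets_restrict_space sets_borel by simp
    also have "\<dots> = sigma_sets X ((\<inter>) X ` {S. open S})"
      by (rule sigma_sets_Int) (use oX in auto)
    finally show ?thesis .
  qed
  have saL: "sigma_algebra X L" using msL by (simp add: measure_space_def)
  have BL: "B \<subseteq> L" unfolding B_eq
    by (rule sigma_algebra.sigma_sets_subset[OF saL]) (use openL in auto)
  have saB: "sigma_algebra X B"
    using sets.sigma_algebra_axioms[of "restrict_space borel X"] by (simp add: B_def space_restrict_space)
  have msB: "measure_space X B f" by (rule measure_down[OF msL saB BL])
  define \<mu> where "\<mu> = measure_of X B f"
  have BP: "B \<subseteq> Pow X" using saB by (simp add: sigma_algebra_iff2)
  have sp: "space \<mu> = X" unfolding \<mu>_def using BP by (simp add: space_measure_of)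
  have st: "sets \<mu> = B" unfolding \<mu>_def using BP saB by (simp add: sets_measure_of sigma_algebra.sigma_sets_eq)
  have em: "emeasure \<mu> A = f A" if "A \<in> B" for A
    unfolding \<mu>_def using msB that by (intro emeasure_measure_of_sigma) (auto simp: measure_space_def)
  have openB: "V \<in> B" if "open V" "V \<subseteq> X" for V
  proof -
    have "X \<inter> V \<in> B" unfolding B_eq using that by auto
    then show ?thesis using that by (simp add: Int_absorb1)
  qed
  have "emeasure \<mu> (space \<mu>) = 1"
    using em[OF openB[OF oX order_refl]] sp om_co[OF co_X] pX by (simp add: f_def)
  then have "prob_space \<mu>" by (rule prob_spaceI)
  moreover have "measure \<mu> V = lam V" if "open V" "V \<subseteq> X" for V
    using em[OF openB[OF that]] om_open[OF that(1)] om_nonneg[of V]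
    by (simp add: measure_def f_def)
  ultimately show ?thesis using sp st B_def by blast
qed

end


context fixes G :: "('a::topological_space, 'b) groupoid_scheme" assumes gp: "is_groupoid G"
begin

lemma g_ss: "gsrc G (gsrc G g) = gsrc G g" and g_rs: "grng G (gsrc G g) = gsrc G g"
  and g_sr: "gsrc G (grng G g) = grng G g" and g_rr: "grng G (grng G g) = grng G g"
  using gp by (auto simp: is_groupoid_def)

lemma g_mul_s: "gsrc G g = grng G h \<Longrightarrow> gsrc G (gmul G g h) = gsrc G h"
  and g_mul_r: "gsrc G g = grng G h \<Longrightarrow> grng G (gmul G g h) = grng G g"
  using gp by (auto simp: is_groupoid_def)

lemma g_assoc: "gsrc G g = grng G h \<Longrightarrow> gsrc G h = grng G k \<Longrightarrow>
    gmul G (gmul G g h) k = gmul G g (gmul G h k)"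
  using gp by (auto simp: is_groupoid_def)

lemma g_lunit: "gmul G (grng G g) g = g" and g_runit: "gmul G g (gsrc G g) = g"
  using gp by (auto simp: is_groupoid_def)

lemma g_inv_s: "gsrc G (ginv G g) = grng G g" and g_inv_r: "grng G (ginv G g) = gsrc G g"
  and g_inv_l: "gmul G (ginv G g) g = gsrc G g"
  using gp by (auto simp: is_groupoid_def)

lemma unit_fix: "u \<in> units G \<Longrightarrow> gsrc G u = u \<and> grng G u = u"
  by (auto simp: units_def g_ss g_rs)

lemma r_unit: "grng G g \<in> units G" and s_unit: "gsrc G g \<in> units G"
  unfolding units_def by (metis g_sr rangeI)+

lemma g_cancel:
  assumes "gsrc G g = grng G h" "gsrc G g = grng G h'" "gmul G g h = gmul G g h'"
  shows "h = h'"
proof -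
  have "gmul G (ginv G g) (gmul G g h) = gmul G (gsrc G g) h"
    by (metis assms(1) g_assoc g_inv_l g_inv_s)
  also have "\<dots> = h" by (metis assms(1) g_lunit)
  finally have 1: "gmul G (ginv G g) (gmul G g h) = h" .
  have "gmul G (ginv G g) (gmul G g h') = gmul G (gsrc G g) h'"
    by (metis assms(2) g_assoc g_inv_l g_inv_s)
  also have "\<dots> = h'" by (metis assms(2) g_lunit)
  finally have 2: "gmul G (ginv G g) (gmul G g h') = h'" .
  show ?thesis using 1 2 assms(3) by metis
qed

lemma setmulE: "x \<in> setmul G A B \<Longrightarrow> (\<And>a b. a \<in> A \<Longrightarrow> b \<in> B \<Longrightarrow> gsrc G a = grng G b \<Longrightarrow> x = gmul G a b \<Longrightarrow> P) \<Longrightarrow> P"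
  by (auto simp: setmul_def)

context fixes F C assumes ms: "compact_open_multisection G F C"
begin

lemma ms_mul: "i \<in> F \<Longrightarrow> j \<in> F \<Longrightarrow> k \<in> F \<Longrightarrow> setmul G (C i j) (C j k) = C i k"
  using ms by (simp add: compact_open_multisection_def)
lemma ms_units: "i \<in> F \<Longrightarrow> C i i \<subseteq> units G"
  using ms by (simp add: compact_open_multisection_def)
lemma ms_bis: "i \<in> F \<Longrightarrow> j \<in> F \<Longrightarrow> bisection G (C i j) \<and> compact (C i j)"
  using ms by (simp add: compact_open_multisection_def)
lemma ms_disj: "i \<in> F \<Longrightarrow> j \<in> F \<Longrightarrow> i \<noteq> j \<Longrightarrow> C i i \<inter> C j j = {}"
  using ms by (simp add: compact_open_multisection_def)

lemma ms_s: assumes "i \<in> F" "j \<in> F" "x \<in> C i j" shows "gsrc G x \<in> C j j"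
proof -
  have "x \<in> setmul G (C i j) (C j j)" using ms_mul[of i j j] assms by simp
  then show ?thesis
  proof (rule setmulE)
    fix a b assume "a \<in> C i j" "b \<in> C j j" "gsrc G a = grng G b" "x = gmul G a b"
    then show ?thesis using g_mul_s unit_fix ms_units assms by (metis subsetD)
  qed
qed

lemma ms_r: assumes "i \<in> F" "j \<in> F" "x \<in> C i j" shows "grng G x \<in> C i i"
proof -
  have "x \<in> setmul G (C i i) (C i j)" using ms_mul[of i i j] assms by simp
  then show ?thesis
  proof (rule setmulE)
    fix a b assume "a \<in> C i i" "b \<in> C i j" "gsrc G a = grng G b" "x = gmul G a b"
    then show ?thesis using g_mul_r unit_fix ms_units assms by (metis subsetD)
  qed
qed

lemma ms_s_ex: assumes "i \<in> F" "j \<in> F" "v \<in> C j j" shows "\<exists>x\<in>C i j. gsrc G x = v"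
proof -
  have "v \<in> setmul G (C j i) (C i j)" using ms_mul[of j i j] assms by simp
  then show ?thesis
  proof (rule setmulE)
    fix a b assume "a \<in> C j i" "b \<in> C i j" "gsrc G a = grng G b" "v = gmul G a b"
    moreover have "gsrc G v = v" using unit_fix ms_units assms by blast
    ultimately show ?thesis using g_mul_s by metis
  qed
qed

lemma ms_r_ex: assumes "i \<in> F" "j \<in> F" "v \<in> C i i" shows "\<exists>x\<in>C i j. grng G x = v"
proof -
  have "v \<in> setmul G (C i j) (C j i)" using ms_mul[of i j i] assms by simp
  then show ?thesis
  proof (rule setmulE)
    fix a b assume "a \<in> C i j" "b \<in> C j i" "gsrc G a = grng G b" "v = gmul G a b"
    moreover have "grng G v = v" using unit_fix ms_units assms by blast
    ultimately show ?thesis using g_mul_r by metis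
  qed
qed

lemma ms_s_img: "i \<in> F \<Longrightarrow> j \<in> F \<Longrightarrow> gsrc G ` C i j = C j j"
  using ms_s ms_s_ex by blast
lemma ms_r_img: "i \<in> F \<Longrightarrow> j \<in> F \<Longrightarrow> grng G ` C i j = C i i"
  using ms_r ms_r_ex by blast

end

lemma sum_ind_card: "finite A \<Longrightarrow> (\<Sum>\<gamma>\<in>A. indicator Q (h \<gamma>) :: real) = real (card {\<gamma>\<in>A. h \<gamma> \<in> Q})"
  by (simp add: indicator_def sum.If_cases Int_def conj_commute)

lemma dens_card: "dens_avg G D Q u = real (card {\<gamma>\<in>fibre G (nd_set D) u. grng G \<gamma> \<in> Q}) / real (card (fibre G (nd_set D) u))"
  if "finite (fibre G (nd_set D) u)"
  using that by (simp add: dens_avg_def sum_ind_card)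

context fixes D :: "'a normal_data" assumes ns: "normal_set G D"
begin

lemma ns_ms: "l \<in> {1..nd_m D} \<Longrightarrow> compact_open_multisection G (nd_F D l) (nd_C D l) \<and> nd_i D l \<in> nd_F D l"
  using ns by (simp add: normal_set_def)

lemma ns_units: "units G = (\<Union>l\<in>{1..nd_m D}. nd_C D l (nd_i D l) (nd_i D l))"
  using ns by (simp add: normal_set_def)

lemma ns_disj: "l \<in> {1..nd_m D} \<Longrightarrow> l' \<in> {1..nd_m D} \<Longrightarrow> l \<noteq> l' \<Longrightarrow>
   nd_C D l (nd_i D l) (nd_i D l) \<inter> nd_C D l' (nd_i D l') (nd_i D l') = {}"
  using ns by (simp add: normal_set_def)

lemma fibre_finite: "finite (fibre G (nd_set D) u)"
proof -
  have "fibre G (nd_set D) u \<subseteq> (\<Union>l\<in>{1..nd_m D}. \<Union>i\<in>nd_F D l. gsrc G -` {u} \<inter> nd_C D l i (nd_i D l))"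
    by (auto simp: fibre_def nd_set_def)
  moreover have "finite (\<Union>l\<in>{1..nd_m D}. \<Union>i\<in>nd_F D l. gsrc G -` {u} \<inter> nd_C D l i (nd_i D l))"
  proof (intro finite_UN_I)
    fix l i assume l: "l \<in> {1..nd_m D}" and i: "i \<in> nd_F D l"
    have "bisection G (nd_C D l i (nd_i D l))" using ns_ms[OF l] ms_bis[of "nd_F D l" "nd_C D l" i "nd_i D l"] i by blast
    then show "finite (gsrc G -` {u} \<inter> nd_C D l i (nd_i D l))"
      by (intro finite_vimage_IntI) (auto simp: bisection_def)
  next
    fix l assume l: "l \<in> {1..nd_m D}"
    then show "finite (nd_F D l)" using ns_ms[OF l] by (simp add: compact_open_multisection_def)
  qed simp
  ultimately show ?thesis by (rule finite_subset)
qed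

lemma fibre_self: "u \<in> units G \<Longrightarrow> u \<in> fibre G (nd_set D) u"
proof -
  assume u: "u \<in> units G"
  then obtain l where l: "l \<in> {1..nd_m D}" "u \<in> nd_C D l (nd_i D l) (nd_i D l)" using ns_units by blast
  then have "u \<in> nd_set D" using ns_ms[OF l(1)] by (auto simp: nd_set_def)
  then show ?thesis using unit_fix[OF u] by (simp add: fibre_def)
qed

lemma fibre_card_pos: "u \<in> units G \<Longrightarrow> card (fibre G (nd_set D) u) > 0"
  using fibre_self fibre_finite card_gt_0_iff by blast

end

lemma count_lemma:
  fixes T :: "'a set"
  assumes fin: "finite (fibre G T u)" and isK: "inj_on (gsrc G) K" and ir: "inj_on (grng G) K"
  shows "finite (fibre G (setmul G K T) u)"
    and "card (fibre G (setmul G K T) u) \<le> card (fibre G T u)"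
    and "card {\<gamma>\<in>fibre G T u. grng G \<gamma> \<in> gsrc G ` K}
          \<le> card {\<gamma>\<in>fibre G T u. grng G \<gamma> \<in> grng G ` K} + card (fibre G (setmul G K T) u - fibre G T u)"
proof -
  define kof where "kof \<gamma> = (SOME k. k \<in> K \<and> gsrc G k = grng G \<gamma>)" for \<gamma>
  define P where "P = {\<gamma>\<in>fibre G T u. grng G \<gamma> \<in> gsrc G ` K}"
  define \<phi> where "\<phi> \<gamma> = gmul G (kof \<gamma>) \<gamma>" for \<gamma>
  have kof: "kof \<gamma> \<in> K \<and> gsrc G (kof \<gamma>) = grng G \<gamma>" if "\<gamma> \<in> P" for \<gamma>
  proof -
    have "grng G \<gamma> \<in> gsrc G ` K" using that by (simp add: P_def)
    then obtain k where k: "k \<in> K" "gsrc G k = grng G \<gamma>" by (metis imageE)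
    have "\<exists>k. k \<in> K \<and> gsrc G k = grng G \<gamma>" using k by blast
    then show ?thesis unfolding kof_def by (rule someI_ex)
  qed
  have finP: "finite P" using fin by (simp add: P_def)
  have img: "\<phi> ` P = fibre G (setmul G K T) u"
  proof
    show "\<phi> ` P \<subseteq> fibre G (setmul G K T) u"
    proof
      fix x assume "x \<in> \<phi> ` P"
      then obtain \<gamma> where g: "\<gamma> \<in> P" "x = \<phi> \<gamma>" by blast
      have gT: "\<gamma> \<in> T" "gsrc G \<gamma> = u" using g(1) by (auto simp: P_def fibre_def)
      have k: "kof \<gamma> \<in> K" "gsrc G (kof \<gamma>) = grng G \<gamma>" using kof[OF g(1)] by auto
      have "x \<in> setmul G K T" unfolding setmul_def g(2) \<phi>_def using k gT by blast
      moreover have "gsrc G x = u" unfolding g(2) \<phi>_def using g_mul_s[OF k(2)] gT by simp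
      ultimately show "x \<in> fibre G (setmul G K T) u" by (simp add: fibre_def)
    qed
  next
    show "fibre G (setmul G K T) u \<subseteq> \<phi> ` P"
    proof
      fix x assume x: "x \<in> fibre G (setmul G K T) u"
      have x1: "x \<in> setmul G K T" "gsrc G x = u" using x by (auto simp: fibre_def)
      from x1(1) obtain k \<gamma> where kg: "k \<in> K" "\<gamma> \<in> T" "gsrc G k = grng G \<gamma>" "x = gmul G k \<gamma>"
        by (rule setmulE)
      have "gsrc G \<gamma> = u" using x1(2) g_mul_s[OF kg(3)] kg(4) by simp
      moreover have "grng G \<gamma> \<in> gsrc G ` K" using image_eqI[where f="gsrc G", OF kg(3)[symmetric] kg(1)] .
      ultimately have gP: "\<gamma> \<in> P" using kg(2) unfolding P_def fibre_def by blast
      have "kof \<gamma> = k" using kof[OF gP] kg(1,3) inj_onD[OF isK] by metis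
      then show "x \<in> \<phi> ` P" using gP kg(4) unfolding \<phi>_def by blast
    qed
  qed
  have inj: "inj_on \<phi> P"
  proof (rule inj_onI)
    fix \<gamma> \<gamma>' assume a: "\<gamma> \<in> P" "\<gamma>' \<in> P" "\<phi> \<gamma> = \<phi> \<gamma>'"
    have k1: "kof \<gamma> \<in> K" "gsrc G (kof \<gamma>) = grng G \<gamma>" using kof[OF a(1)] by auto
    have k2: "kof \<gamma>' \<in> K" "gsrc G (kof \<gamma>') = grng G \<gamma>'" using kof[OF a(2)] by auto
    have "grng G (kof \<gamma>) = grng G (\<phi> \<gamma>)" using g_mul_r[OF k1(2)] by (simp add: \<phi>_def)
    also have "\<dots> = grng G (\<phi> \<gamma>')" using a(3) by simp
    also have "\<dots> = grng G (kof \<gamma>')" using g_mul_r[OF k2(2)] by (simp add: \<phi>_def)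
    finally have "kof \<gamma> = kof \<gamma>'" using inj_onD[OF ir _ k1(1) k2(1)] by blast
    then have "gsrc G (kof \<gamma>) = grng G \<gamma>'" using k2 by simp
    moreover have "gmul G (kof \<gamma>) \<gamma> = gmul G (kof \<gamma>) \<gamma>'" using a(3) \<open>kof \<gamma> = kof \<gamma>'\<close> by (simp add: \<phi>_def)
    ultimately show "\<gamma> = \<gamma>'" using g_cancel[OF k1(2)] by blast
  qed
  show finKT: "finite (fibre G (setmul G K T) u)" using finite_imageI[OF finP, of \<phi>] img by simp
  have cP: "card P = card (fibre G (setmul G K T) u)" using card_image[OF inj] img by simp
  show "card (fibre G (setmul G K T) u) \<le> card (fibre G T u)"
  proof -
    have "card P \<le> card (fibre G T u)" by (rule card_mono[OF fin]) (auto simp: P_def)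
    then show ?thesis using cP by simp
  qed
  have sub: "fibre G (setmul G K T) u \<inter> fibre G T u \<subseteq> {\<gamma>\<in>fibre G T u. grng G \<gamma> \<in> grng G ` K}"
  proof
    fix x assume x: "x \<in> fibre G (setmul G K T) u \<inter> fibre G T u"
    have "x \<in> setmul G K T" using x by (simp add: fibre_def)
    then obtain k \<gamma> where kg: "k \<in> K" "\<gamma> \<in> T" "gsrc G k = grng G \<gamma>" "x = gmul G k \<gamma>"
      by (rule setmulE)
    then have "grng G x = grng G k" using g_mul_r by simp
    then show "x \<in> {\<gamma>\<in>fibre G T u. grng G \<gamma> \<in> grng G ` K}" using x kg(1) by blast
  qed
  have "card P = card (fibre G (setmul G K T) u \<inter> fibre G T u) + card (fibre G (setmul G K T) u - fibre G T u)"
    using cP card_Int_Diff[OF finKT, of "fibre G T u"] by linarith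
  also have "card (fibre G (setmul G K T) u \<inter> fibre G T u) \<le> card {\<gamma>\<in>fibre G T u. grng G \<gamma> \<in> grng G ` K}"
    by (rule card_mono[OF _ sub]) (use fin in simp)
  finally show "card {\<gamma>\<in>fibre G T u. grng G \<gamma> \<in> gsrc G ` K}
          \<le> card {\<gamma>\<in>fibre G T u. grng G \<gamma> \<in> grng G ` K} + card (fibre G (setmul G K T) u - fibre G T u)"
    unfolding P_def by simp
qed

end


lemma local_homeo_open_map:
  assumes lh: "local_homeo f" and W: "open W"
  shows "open (f ` W)"
proof -
  have *: "\<forall>x\<in>W. \<exists>V. open V \<and> f x \<in> V \<and> V \<subseteq> f ` W"
  proof
    fix x assume x: "x \<in> W"
    obtain U g where U: "open U" "x \<in> U" "open (f ` U)" "homeomorphism U (f ` U) f g"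
      using lh unfolding local_homeo_def by blast
    have "openin (top_of_set U) (W \<inter> U)" using W by (auto simp: openin_open)
    then have "openin (top_of_set (f ` U)) (f ` (W \<inter> U))"
      by (rule homeomorphism_imp_open_map[OF U(4)])
    then have "open (f ` (W \<inter> U))" using U(3) by (rule openin_open_trans)
    then show "\<exists>V. open V \<and> f x \<in> V \<and> V \<subseteq> f ` W" using x U by blast
  qed
  show ?thesis
  proof (subst open_subopen, intro ballI)
    fix y assume "y \<in> f ` W"
    then obtain x where "x \<in> W" "y = f x" by blast
    then show "\<exists>T. open T \<and> y \<in> T \<and> T \<subseteq> f ` W" using * by blast
  qed
qed

context fixes G :: "('a::t2_space, 'b) groupoid_scheme" assumes ag: "ample_groupoid G"
begin

lemma ag_gp: "is_groupoid G" using ag by (simp add: ample_groupoid_def)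
lemma ag_cont_s: "continuous_on UNIV (gsrc G)" and ag_cont_r: "continuous_on UNIV (grng G)"
  and ag_cont_inv: "continuous_on UNIV (ginv G)"
  using ag by (simp_all add: ample_groupoid_def)
lemma ag_lh_s: "local_homeo (gsrc G)" and ag_lh_r: "local_homeo (grng G)"
  using ag by (simp_all add: ample_groupoid_def)
lemma ag_basis: "open U \<Longrightarrow> x \<in> U \<Longrightarrow> \<exists>B. bisection G B \<and> compact B \<and> x \<in> B \<and> B \<subseteq> U"
  using ag by (simp add: ample_groupoid_def)
lemma ag_cunits: "compact (units G)" using ag by (simp add: ample_groupoid_def)

lemma s_open: "open W \<Longrightarrow> open (gsrc G ` W)" using local_homeo_open_map[OF ag_lh_s] .
lemma r_open: "open W \<Longrightarrow> open (grng G ` W)" using local_homeo_open_map[OF ag_lh_r] .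

lemma units_open: "open (units G)"
proof -
  have "units G = gsrc G ` UNIV" by (simp add: units_def)
  then show ?thesis using s_open by simp
qed

lemma co_basis: "open U \<Longrightarrow> x \<in> U \<Longrightarrow> x \<in> units G \<Longrightarrow>
   \<exists>K. compact K \<and> open K \<and> K \<subseteq> units G \<and> x \<in> K \<and> K \<subseteq> U"
proof -
  assume a: "open U" "x \<in> U" "x \<in> units G"
  then obtain B where "bisection G B" "compact B" "x \<in> B" "B \<subseteq> U \<inter> units G"
    using ag_basis[of "U \<inter> units G" x] units_open by blast
  then show ?thesis by (auto simp: bisection_def)
qed

lemma sub_bisection:
  assumes B: "bisection G B" and qc: "continuous_on UNIV q" and qo: "\<And>W. open W \<Longrightarrow> open (q ` W)"
    and K: "compact K" "open K" "K \<subseteq> q ` B"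
  shows "\<exists>C. bisection G C \<and> compact C \<and> C \<subseteq> B \<and> q ` C = K"
proof -
  have oB: "open B" using B by (simp add: bisection_def)
  have oV: "open (B \<inter> q -` K)" using oB K(2) qc by (intro open_Int open_vimage)
  have "\<forall>y\<in>K. \<exists>D. bisection G D \<and> compact D \<and> y \<in> q ` D \<and> D \<subseteq> B \<inter> q -` K"
  proof
    fix y assume y: "y \<in> K"
    then obtain x where x: "x \<in> B" "q x = y" using K(3) by blast
    then have "x \<in> B \<inter> q -` K" using y by simp
    then obtain D where "bisection G D" "compact D" "x \<in> D" "D \<subseteq> B \<inter> q -` K"
      using ag_basis[OF oV] by blast
    then show "\<exists>D. bisection G D \<and> compact D \<and> y \<in> q ` D \<and> D \<subseteq> B \<inter> q -` K"
      using x by blast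
  qed
  then obtain D where D: "\<And>y. y \<in> K \<Longrightarrow> bisection G (D y) \<and> compact (D y) \<and> y \<in> q ` D y \<and> D y \<subseteq> B \<inter> q -` K"
    by metis
  have "\<And>y. y \<in> K \<Longrightarrow> open (q ` D y)" using D qo by (simp add: bisection_def)
  moreover have "K \<subseteq> \<Union>((\<lambda>y. q ` D y) ` K)" using D by blast
  ultimately obtain E where E: "E \<subseteq> K" "finite E" "K \<subseteq> \<Union>((\<lambda>y. q ` D y) ` E)"
    using compactE_image[OF K(1), of K "\<lambda>y. q ` D y"] by blast
  define C where "C = \<Union>(D ` E)"
  have CB: "C \<subseteq> B" using D E by (auto simp: C_def)
  have "open C" unfolding C_def using D E by (auto simp: bisection_def)
  moreover have "inj_on (gsrc G) C" "inj_on (grng G) C" using B CB by (auto simp: bisection_def intro: inj_on_subset)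
  ultimately have "bisection G C" by (simp add: bisection_def)
  moreover have "compact C" unfolding C_def using D E by (intro compact_UN) auto
  moreover have "q ` C = K"
  proof
    show "q ` C \<subseteq> K" using D E by (auto simp: C_def)
    show "K \<subseteq> q ` C" unfolding C_def image_UN using E(3) by blast
  qed
  ultimately show ?thesis using CB by blast
qed

lemma inv_measure_from_p:
  assumes cm: "comeas (units G) p"
    and pinv: "\<And>C. bisection G C \<Longrightarrow> compact C \<Longrightarrow> p (gsrc G ` C) = p (grng G ` C)"
  shows "\<exists>\<mu>\<in>inv_measures G. \<forall>K. compact K \<and> open K \<and> K \<subseteq> units G \<longrightarrow> measure \<mu> K = p K"
proof -
  interpret comeas "units G" p by (rule cm)
  obtain \<mu> where \<mu>0: "prob_space \<mu> \<and> space \<mu> = units G \<and> sets \<mu> = sets (restrict_space borel (units G)) \<and>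
       (\<forall>V. open V \<longrightarrow> V \<subseteq> units G \<longrightarrow> measure \<mu> V = lam V)"
    using exists_measure by (elim exE)
  have \<mu>: "prob_space \<mu>" "space \<mu> = units G" "sets \<mu> = sets (restrict_space borel (units G))"
    "\<And>V. open V \<Longrightarrow> V \<subseteq> units G \<Longrightarrow> measure \<mu> V = lam V"
    using \<mu>0 by auto
  have half: "lam (q1 ` B) \<le> lam (q2 ` B)"
    if B: "bisection G B" and q1: "continuous_on UNIV q1" "\<And>W. open W \<Longrightarrow> open (q1 ` W)"
      and q2: "continuous_on UNIV q2" "\<And>W. open W \<Longrightarrow> open (q2 ` W)" "\<And>g. q2 g \<in> units G"
      and pq: "\<And>C. bisection G C \<Longrightarrow> compact C \<Longrightarrow> p (q1 ` C) = p (q2 ` C)"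
    for B q1 q2
  proof (rule lam_le)
    fix K assume K: "K \<in> CO" "K \<subseteq> q1 ` B"
    have Kc: "compact K" "open K" using K(1) by (auto simp: CO_def)
    obtain C where C: "bisection G C" "compact C" "C \<subseteq> B" "q1 ` C = K"
      using sub_bisection[OF B q1 Kc K(2)] by blast
    have "compact (q2 ` C)" using compact_continuous_image[OF continuous_on_subset[OF q2(1)] C(2)] by simp
    moreover have "open (q2 ` C)" using C(1) q2(2) by (simp add: bisection_def)
    moreover have "q2 ` C \<subseteq> units G" using q2(3) by blast
    ultimately have "q2 ` C \<in> CO" unfolding CO_def by blast
    then have "p (q2 ` C) \<le> lam (q2 ` B)" using C by (intro lam_ge) auto
    then show "p K \<le> lam (q2 ` B)" using pq[OF C(1,2)] C(4) by simp
  qed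
  have eq: "lam (gsrc G ` B) = lam (grng G ` B)" if B: "bisection G B" for B
  proof (rule antisym)
    show "lam (gsrc G ` B) \<le> lam (grng G ` B)"
      by (rule half[OF B ag_cont_s s_open ag_cont_r r_open r_unit[OF ag_gp] pinv])
    show "lam (grng G ` B) \<le> lam (gsrc G ` B)"
      by (rule half[OF B ag_cont_r r_open ag_cont_s s_open s_unit[OF ag_gp]]) (use pinv in auto)
  qed
  have fm: "finite_measure \<mu>" using \<mu>(1) by (simp add: prob_space_def)
  have "emeasure \<mu> (gsrc G ` B) = emeasure \<mu> (grng G ` B)" if B: "bisection G B" for B
  proof -
    have oB: "open B" using B by (simp add: bisection_def)
    have s1: "gsrc G ` B \<subseteq> units G" using s_unit[OF ag_gp] by blast
    have r1: "grng G ` B \<subseteq> units G" using r_unit[OF ag_gp] by blast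
    have "measure \<mu> (gsrc G ` B) = measure \<mu> (grng G ` B)"
      using \<mu>(4)[OF s_open[OF oB] s1] \<mu>(4)[OF r_open[OF oB] r1] eq[OF B] by simp
    then show ?thesis unfolding finite_measure.emeasure_eq_measure[OF fm] by simp
  qed
  then have "\<mu> \<in> inv_measures G" using \<mu> by (simp add: inv_measures_def)
  moreover have "measure \<mu> K = p K" if "compact K" "open K" "K \<subseteq> units G" for K
    using \<mu>(4)[of K] lam_co[of K] that by (simp add: CO_def)
  ultimately show ?thesis by blast
qed

end


definition ratio :: "('a, 'b) groupoid_scheme \<Rightarrow> 'a set \<Rightarrow> 'a normal_data \<Rightarrow> 'a \<Rightarrow> real" where
  "ratio G K D u = real (card (fibre G (setmul G K (nd_set D)) u - fibre G (nd_set D) u))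
                             / real (card (fibre G (nd_set D) u))"

lemma dens_card2: "finite (fibre G (nd_set D) u) \<Longrightarrow> dens_avg G D Q u = real (card {\<gamma>\<in>fibre G (nd_set D) u. grng G \<gamma> \<in> Q}) / real (card (fibre G (nd_set D) u))"
  by (simp add: dens_avg_def indicator_def sum.If_cases Int_def conj_commute)

lemma dens_avg_bounds:
  assumes "finite (fibre G (nd_set D) u)"
  shows "0 \<le> dens_avg G D Q u" "dens_avg G D Q u \<le> 1"
proof -
  let ?F = "fibre G (nd_set D) u"
  have "card {\<gamma>\<in>?F. grng G \<gamma> \<in> Q} \<le> card ?F" by (rule card_mono[OF assms]) auto
  then show "0 \<le> dens_avg G D Q u" "dens_avg G D Q u \<le> 1"
    unfolding dens_card2[OF assms] by (auto simp: divide_le_eq_1)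
qed

lemma dens_avg_add:
  assumes "K \<inter> K' = {}"
  shows "dens_avg G D (K \<union> K') u = dens_avg G D K u + dens_avg G D K' u"
proof -
  have "\<And>x. indicator (K \<union> K') x = (indicator K x + indicator K' x :: real)"
    using assms by (auto simp: indicator_def)
  then show ?thesis unfolding dens_avg_def by (simp add: sum.distrib add_divide_distrib)
qed

context fixes G :: "('a::t2_space, 'b) groupoid_scheme" assumes ag: "ample_groupoid G"
begin

lemma dens_units: assumes ns: "normal_set G D" and u: "u \<in> units G"
  shows "dens_avg G D (units G) u = 1"
proof -
  have fin: "finite (fibre G (nd_set D) u)" by (rule fibre_finite[OF ag_gp[OF ag] ns])
  have "{\<gamma>\<in>fibre G (nd_set D) u. grng G \<gamma> \<in> units G} = fibre G (nd_set D) u"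
    using r_unit[OF ag_gp[OF ag]] by auto
  then show ?thesis unfolding dens_card2[OF fin]
    using fibre_card_pos[OF ag_gp[OF ag] ns u] by simp
qed

lemma ratio_bounds:
  assumes ns: "normal_set G D" and u: "u \<in> units G" and isK: "inj_on (gsrc G) K" and irK: "inj_on (grng G) K"
  shows "0 \<le> ratio G K D u" "ratio G K D u \<le> 1"
    and "dens_avg G D (gsrc G ` K) u \<le> dens_avg G D (grng G ` K) u + ratio G K D u"
proof -
  have gp: "is_groupoid G" by (rule ag_gp[OF ag])
  have fin: "finite (fibre G (nd_set D) u)" by (rule fibre_finite[OF gp ns])
  have pos: "card (fibre G (nd_set D) u) > 0" by (rule fibre_card_pos[OF gp ns u])
  note cl = count_lemma[OF gp fin isK irK]
  show "0 \<le> ratio G K D u" by (simp add: ratio_def)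
  have "card (fibre G (setmul G K (nd_set D)) u - fibre G (nd_set D) u) \<le> card (fibre G (setmul G K (nd_set D)) u)"
    by (rule card_mono[OF cl(1)]) auto
  then have "card (fibre G (setmul G K (nd_set D)) u - fibre G (nd_set D) u) \<le> card (fibre G (nd_set D) u)"
    using cl(2) by linarith
  then show "ratio G K D u \<le> 1" using pos by (simp add: ratio_def divide_le_eq_1)
  have "real (card {\<gamma>\<in>fibre G (nd_set D) u. grng G \<gamma> \<in> gsrc G ` K})
     \<le> real (card {\<gamma>\<in>fibre G (nd_set D) u. grng G \<gamma> \<in> grng G ` K})
       + real (card (fibre G (setmul G K (nd_set D)) u - fibre G (nd_set D) u))"
    using cl(3) by linarith
  then show "dens_avg G D (gsrc G ` K) u \<le> dens_avg G D (grng G ` K) u + ratio G K D u"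
    unfolding dens_card2[OF fin] ratio_def using pos by (simp add: divide_right_mono add_divide_distrib[symmetric])
qed

lemma cluster_closed:
  assumes cl: "inf (nhds p) (filtermap \<Phi> F0) \<noteq> bot" and C: "closed Cs"
    and ev: "eventually (\<lambda>n. \<Phi> n \<in> Cs) F0"
  shows "p \<in> Cs"
proof (rule ccontr)
  assume "p \<notin> Cs"
  then have e1: "eventually (\<lambda>x. x \<in> - Cs) (nhds p)" using C
    by (intro eventually_nhds_in_open) auto
  have e2: "eventually (\<lambda>x. x \<in> Cs) (filtermap \<Phi> F0)" using ev by (simp add: eventually_filtermap)
  have "eventually (\<lambda>x. False) (inf (nhds p) (filtermap \<Phi> F0))"
    unfolding eventually_inf using e1 e2 by blast
  then show False using cl by (simp add: eventually_False)
qed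

lemma inv_img_s: "gsrc G ` ginv G ` C = grng G ` C" and inv_img_r: "grng G ` ginv G ` C = gsrc G ` C"
  using g_inv_s[OF ag_gp[OF ag]] g_inv_r[OF ag_gp[OF ag]] by (auto simp: image_image)

lemma inv_inj: assumes "inj_on (gsrc G) C" "inj_on (grng G) C"
  shows "inj_on (gsrc G) (ginv G ` C)" "inj_on (grng G) (ginv G ` C)"
proof -
  show "inj_on (gsrc G) (ginv G ` C)"
  proof (rule inj_onI)
    fix x y assume "x \<in> ginv G ` C" "y \<in> ginv G ` C" "gsrc G x = gsrc G y"
    then obtain a b where ab: "a \<in> C" "b \<in> C" "x = ginv G a" "y = ginv G b" "gsrc G (ginv G a) = gsrc G (ginv G b)" by blast
    then have "grng G a = grng G b" using g_inv_s[OF ag_gp[OF ag]] by simp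
    then have "a = b" using inj_onD[OF assms(2)] ab by blast
    then show "x = y" using ab by simp
  qed
  show "inj_on (grng G) (ginv G ` C)"
  proof (rule inj_onI)
    fix x y assume "x \<in> ginv G ` C" "y \<in> ginv G ` C" "grng G x = grng G y"
    then obtain a b where ab: "a \<in> C" "b \<in> C" "x = ginv G a" "y = ginv G b" "grng G (ginv G a) = grng G (ginv G b)" by blast
    then have "gsrc G a = gsrc G b" using g_inv_r[OF ag_gp[OF ag]] by simp
    then have "a = b" using inj_onD[OF assms(1)] ab by blast
    then show "x = y" using ab by simp
  qed
qed

lemma upper:
  assumes fol: "folner G S" and A: "A \<subseteq> units G" "compact A" "open A"
  shows "upper_density G S A \<le> sup_measure G A"
  unfolding upper_density_def
proof (rule dense_le)
  have gp: "is_groupoid G" by (rule ag_gp[OF ag])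
  have ns: "\<And>n. normal_set G (S n)" using fol by (simp add: folner_def)
  have sm0: "0 \<le> sup_measure G A" unfolding sup_measure_def by (rule Sup_upper) simp
  fix y assume y: "y < limsup (\<lambda>n. dens_sup G (S n) A)"
  show "y \<le> sup_measure G A"
  proof (cases "y \<le> 0")
    case True then show ?thesis using sm0 by simp
  next
    case False
    have fr: "frequently (\<lambda>n. y < dens_sup G (S n) A) sequentially"
    proof (rule ccontr)
      assume "\<not> frequently (\<lambda>n. y < dens_sup G (S n) A) sequentially"
      then have "eventually (\<lambda>n. dens_sup G (S n) A \<le> y) sequentially"
        by (simp add: frequently_def not_less)
      then have "limsup (\<lambda>n. dens_sup G (S n) A) \<le> y" by (rule Limsup_bounded)
      then show False using y by simp
    qed
    have "y \<noteq> \<infinity>" using y by auto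
    moreover have "y \<noteq> -\<infinity>" using False by auto
    ultimately obtain c where c: "y = ereal c" by (cases y) auto
    have cpos: "c > 0" using False c by simp
    define I where "I = {n. y < dens_sup G (S n) A}"
    have exu: "\<exists>v\<in>units G. c < dens_avg G (S n) A v" if "n \<in> I" for n
    proof -
      have "ereal c < Sup (insert 0 ((\<lambda>u. ereal (dens_avg G (S n) A u)) ` units G))"
        using that c by (simp add: I_def dens_sup_def)
      then obtain x where x: "x \<in> insert 0 ((\<lambda>u. ereal (dens_avg G (S n) A u)) ` units G)" "ereal c < x"
        using less_Sup_iff by blast
      then have "x \<noteq> 0" using cpos by auto
      then obtain v where "v \<in> units G" "x = ereal (dens_avg G (S n) A v)" using x(1) by blast
      then show ?thesis using x(2) by auto
    qed
    have une: "gsrc G undefined \<in> units G" by (simp add: units_def)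
    define u where "u n = (SOME v. v \<in> units G \<and> (n \<in> I \<longrightarrow> c < dens_avg G (S n) A v))" for n
    have u: "u n \<in> units G \<and> (n \<in> I \<longrightarrow> c < dens_avg G (S n) A (u n))" for n
    proof -
      have "\<exists>v. v \<in> units G \<and> (n \<in> I \<longrightarrow> c < dens_avg G (S n) A v)"
        using exu une by (cases "n \<in> I") auto
      then show ?thesis unfolding u_def by (rule someI_ex)
    qed
    define \<Phi> where "\<Phi> n = (\<lambda>K. dens_avg G (S n) K (u n))" for n
    define F0 where "F0 = inf sequentially (principal I)"
    have F0: "F0 \<noteq> bot"
    proof
      assume "F0 = bot"
      then have "eventually (\<lambda>n. False) F0" by simp
      then have "eventually (\<lambda>n. n \<notin> I) sequentially"
        unfolding F0_def eventually_inf_principal by simp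
      then show False using fr unfolding frequently_def I_def by simp
    qed
    have F0seq: "eventually P F0" if "eventually P sequentially" for P
      unfolding F0_def using that by (simp add: eventually_inf_principal eventually_mono)
    define Ub where "Ub = (PiE UNIV (\<lambda>_::'a set. {0..1::real}))"
    have cUb: "compact Ub"
    proof -
      have "compactin (product_topology (\<lambda>_. euclidean) UNIV) Ub"
        unfolding Ub_def compactin_PiE by simp
      then show ?thesis by (simp add: euclidean_product_topology compactin_euclidean_iff)
    qed
    have fin: "\<And>n. finite (fibre G (nd_set (S n)) (u n))" using fibre_finite[OF gp ns] by blast
    have PhiU: "\<Phi> n \<in> Ub" for n
      using dens_avg_bounds[OF fin[of n]] by (simp add: Ub_def \<Phi>_def PiE_UNIV_domain Pi_iff)
    have "eventually (\<lambda>x. x \<in> Ub) (filtermap \<Phi> F0)"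
      by (simp add: eventually_filtermap PhiU)
    moreover have "filtermap \<Phi> F0 \<noteq> bot" using F0 by (simp add: filtermap_bot_iff)
    ultimately obtain p where pU: "p \<in> Ub" and pcl: "inf (nhds p) (filtermap \<Phi> F0) \<noteq> bot"
      using cUb unfolding compact_filter by blast
    note pin = cluster_closed[OF pcl]
    have ppos: "\<And>K. 0 \<le> p K" using pU by (simp add: Ub_def PiE_UNIV_domain Pi_iff)
    have padd: "p (K \<union> K') = p K + p K'" if "K \<inter> K' = {}" for K K'
    proof -
      have "p \<in> {f. f (K \<union> K') = f K + f K'}"
        by (rule pin) (auto intro!: closed_Collect_eq continuous_intros simp: \<Phi>_def dens_avg_add[OF that])
      then show ?thesis by simp
    qed
    have pX: "p (units G) = 1"
    proof -
      have "p \<in> {f. f (units G) = 1}"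
        by (rule pin) (auto intro!: closed_Collect_eq continuous_intros simp: \<Phi>_def dens_units[OF ns u[THEN conjunct1]])
      then show ?thesis by simp
    qed
    have pA: "c \<le> p A"
    proof -
      have "p \<in> {f. c \<le> f A}"
      proof (rule pin)
        show "closed {f. c \<le> f A}" by (auto intro!: closed_Collect_le continuous_intros)
        show "eventually (\<lambda>n. \<Phi> n \<in> {f. c \<le> f A}) F0"
          unfolding F0_def eventually_inf_principal using u by (auto simp: \<Phi>_def less_imp_le)
      qed
      then show ?thesis by simp
    qed
    have half: "p (gsrc G ` K) \<le> p (grng G ` K)"
      if K: "compact K" "inj_on (gsrc G) K" "inj_on (grng G) K" for K
    proof (rule field_le_epsilon)
      fix e :: real assume e: "0 < e"
      have lim: "(\<lambda>n. SUP v\<in>units G. ratio G K (S n) v) \<longlonglongrightarrow> 0"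
        using fol K(1) unfolding folner_def ratio_def by blast
      have ev: "eventually (\<lambda>n. (SUP v\<in>units G. ratio G K (S n) v) < e) sequentially"
        using order_tendstoD(2)[OF lim e] .
      have "eventually (\<lambda>n. \<Phi> n \<in> {f. f (gsrc G ` K) \<le> f (grng G ` K) + e}) F0"
      proof (rule F0seq, rule eventually_mono[OF ev], simp)
        fix n assume n: "(SUP v\<in>units G. ratio G K (S n) v) < e"
        have bdd: "bdd_above ((\<lambda>v. ratio G K (S n) v) ` units G)"
          by (rule bdd_aboveI[of _ 1]) (use ratio_bounds(2)[OF ns _ K(2,3)] in auto)
        have "ratio G K (S n) (u n) \<le> (SUP v\<in>units G. ratio G K (S n) v)"
          by (rule cSUP_upper[OF u[THEN conjunct1] bdd])
        then show "\<Phi> n (gsrc G ` K) \<le> \<Phi> n (grng G ` K) + e"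
          using ratio_bounds(3)[OF ns[of n] u[THEN conjunct1, of n] K(2,3)] n unfolding \<Phi>_def by linarith
      qed
      then have "p \<in> {f. f (gsrc G ` K) \<le> f (grng G ` K) + e}"
        by (intro pin) (auto intro!: closed_Collect_le continuous_intros)
      then show "p (gsrc G ` K) \<le> p (grng G ` K) + e" by simp
    qed
    have pinv: "p (gsrc G ` C) = p (grng G ` C)" if C: "bisection G C" "compact C" for C
    proof (rule antisym)
      have ij: "inj_on (gsrc G) C" "inj_on (grng G) C" using C by (auto simp: bisection_def)
      show "p (gsrc G ` C) \<le> p (grng G ` C)" by (rule half[OF C(2) ij])
      have "compact (ginv G ` C)"
        by (rule compact_continuous_image[OF continuous_on_subset[OF ag_cont_inv[OF ag]] C(2)]) simp
      from half[OF this inv_inj[OF ij]]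
      show "p (grng G ` C) \<le> p (gsrc G ` C)" unfolding inv_img_s inv_img_r .
    qed
    have cm: "comeas (units G) p"
      by (unfold_locales) (auto intro: ag_cunits[OF ag] units_open[OF ag] co_basis[OF ag] ppos padd pX)
    obtain \<mu> where \<mu>: "\<mu> \<in> inv_measures G" "\<And>K. compact K \<Longrightarrow> open K \<Longrightarrow> K \<subseteq> units G \<Longrightarrow> measure \<mu> K = p K"
      using inv_measure_from_p[OF ag cm pinv] by blast
    have "y \<le> ereal (measure \<mu> A)" using \<mu>(2)[OF A(2,3,1)] pA c by simp
    also have "\<dots> \<le> sup_measure G A" unfolding sup_measure_def
      by (rule Sup_upper) (use \<mu>(1) in blast)
    finally show ?thesis .
  qed
qed

end


lemma lower_count:
  fixes G :: "('a::topological_space, 'b) groupoid_scheme"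
  assumes gp: "is_groupoid G" and ns: "normal_set G D" and l: "l \<in> {1..nd_m D}"
    and u: "u \<in> nd_C D l (nd_i D l) (nd_i D l)"
  shows "card (fibre G (nd_set D) u) = card (nd_F D l)"
    and "(\<Sum>\<gamma>\<in>fibre G (nd_set D) u. indicator A (grng G \<gamma>) :: real)
       = (\<Sum>i\<in>nd_F D l. indicator (gsrc G ` (nd_C D l i (nd_i D l) \<inter> grng G -` A)) u)"
proof -
  let ?F = "nd_F D l" and ?C = "nd_C D l" and ?il = "nd_i D l"
  have ms: "compact_open_multisection G ?F ?C" and il: "?il \<in> ?F" using ns_ms[OF gp ns l] by auto
  have finF: "finite ?F" using ms by (simp add: compact_open_multisection_def)
  have dec: "fibre G (nd_set D) u = (\<Union>i\<in>?F. fibre G (?C i ?il) u)"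
  proof
    show "(\<Union>i\<in>?F. fibre G (?C i ?il) u) \<subseteq> fibre G (nd_set D) u"
      using l by (auto simp: fibre_def nd_set_def)
    show "fibre G (nd_set D) u \<subseteq> (\<Union>i\<in>?F. fibre G (?C i ?il) u)"
    proof
      fix x assume x: "x \<in> fibre G (nd_set D) u"
      then obtain l' i where li: "l' \<in> {1..nd_m D}" "i \<in> nd_F D l'" "x \<in> nd_C D l' i (nd_i D l')" "gsrc G x = u"
        by (auto simp: fibre_def nd_set_def)
      have ms': "compact_open_multisection G (nd_F D l') (nd_C D l')" "nd_i D l' \<in> nd_F D l'"
        using ns_ms[OF gp ns li(1)] by auto
      have "u \<in> nd_C D l' (nd_i D l') (nd_i D l')"
        using ms_s[OF gp ms'(1) li(2) ms'(2) li(3)] li(4) by simp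
      then have "l' = l" using ns_disj[OF gp ns li(1) l] u by blast
      then show "x \<in> (\<Union>i\<in>?F. fibre G (?C i ?il) u)" using li by (auto simp: fibre_def)
    qed
  qed
  have sing: "\<exists>x. fibre G (?C i ?il) u = {x} \<and> x \<in> ?C i ?il \<and> gsrc G x = u" if i: "i \<in> ?F" for i
  proof -
    obtain x where x: "x \<in> ?C i ?il" "gsrc G x = u" using ms_s_ex[OF gp ms i il u] by blast
    have inj: "inj_on (gsrc G) (?C i ?il)" using ms_bis[OF gp ms i il] by (simp add: bisection_def)
    have "fibre G (?C i ?il) u = {x}" using x inj_onD[OF inj] by (auto simp: fibre_def)
    then show ?thesis using x by blast
  qed
  have disj: "disjoint_family_on (\<lambda>i. fibre G (?C i ?il) u) ?F"
    unfolding disjoint_family_on_def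
  proof (intro ballI impI)
    fix i j assume ij: "i \<in> ?F" "j \<in> ?F" "i \<noteq> j"
    show "fibre G (?C i ?il) u \<inter> fibre G (?C j ?il) u = {}"
    proof (rule ccontr)
      assume "fibre G (?C i ?il) u \<inter> fibre G (?C j ?il) u \<noteq> {}"
      then obtain x where "x \<in> ?C i ?il" "x \<in> ?C j ?il" by (auto simp: fibre_def)
      then have "grng G x \<in> ?C i i" "grng G x \<in> ?C j j"
        using ms_r[OF gp ms ij(1) il] ms_r[OF gp ms ij(2) il] by auto
      then show False using ms_disj[OF gp ms ij] by blast
    qed
  qed
  have finfib: "\<And>i. i \<in> ?F \<Longrightarrow> finite (fibre G (?C i ?il) u)" using sing by force
  have "card (fibre G (nd_set D) u) = (\<Sum>i\<in>?F. card (fibre G (?C i ?il) u))"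
    unfolding dec by (rule card_UN_disjoint'[OF disj finfib finF])
  also have "\<dots> = (\<Sum>i\<in>?F. 1)" by (rule sum.cong) (use sing in force)+
  finally show "card (fibre G (nd_set D) u) = card ?F" by simp
  have "(\<Sum>\<gamma>\<in>fibre G (nd_set D) u. indicator A (grng G \<gamma>) :: real)
      = (\<Sum>i\<in>?F. \<Sum>\<gamma>\<in>fibre G (?C i ?il) u. indicator A (grng G \<gamma>))"
    unfolding dec by (rule sum.UNION_disjoint_family) (use finF finfib disj in auto)
  also have "\<dots> = (\<Sum>i\<in>?F. indicator (gsrc G ` (?C i ?il \<inter> grng G -` A)) u)"
  proof (rule sum.cong[OF refl])
    fix i assume i: "i \<in> ?F"
    obtain x where x: "fibre G (?C i ?il) u = {x}" "x \<in> ?C i ?il" "gsrc G x = u" using sing[OF i] by blast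
    have inj: "inj_on (gsrc G) (?C i ?il)" using ms_bis[OF gp ms i il] by (simp add: bisection_def)
    have "u \<in> gsrc G ` (?C i ?il \<inter> grng G -` A) \<longleftrightarrow> grng G x \<in> A"
    proof
      assume "u \<in> gsrc G ` (?C i ?il \<inter> grng G -` A)"
      then obtain y where "y \<in> ?C i ?il" "grng G y \<in> A" "gsrc G y = u" by blast
      then have "y = x" using x inj_onD[OF inj] by metis
      then show "grng G x \<in> A" using \<open>grng G y \<in> A\<close> by simp
    next
      assume "grng G x \<in> A"
      then show "u \<in> gsrc G ` (?C i ?il \<inter> grng G -` A)" using x by force
    qed
    then show "(\<Sum>\<gamma>\<in>fibre G (?C i ?il) u. indicator A (grng G \<gamma>)) = indicator (gsrc G ` (?C i ?il \<inter> grng G -` A)) u"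
      using x(1) by (simp add: indicator_def)
  qed
  finally show "(\<Sum>\<gamma>\<in>fibre G (nd_set D) u. indicator A (grng G \<gamma>) :: real)
       = (\<Sum>i\<in>nd_F D l. indicator (gsrc G ` (nd_C D l i (nd_i D l) \<inter> grng G -` A)) u)" .
qed

context fixes G :: "('a::t2_space, 'b) groupoid_scheme" assumes ag: "ample_groupoid G"
begin

lemma lower_each:
  assumes ns: "normal_set G D" and good: "good G M \<epsilon> D" and ch: "controlled_height N D"
    and \<mu>: "\<mu> \<in> inv_measures G" and A: "A \<subseteq> units G" "open A"
    and s: "\<And>u. u \<in> units G \<Longrightarrow> dens_avg G D A u \<le> s" and s0: "0 \<le> s"
  shows "measure \<mu> A \<le> real N * s + \<epsilon>"
proof -
  have gp: "is_groupoid G" by (rule ag_gp[OF ag])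
  define L1 where "L1 = {1..nd_m D}"
  define F where "F = nd_F D"
  define C where "C = nd_C D"
  define il where "il = nd_i D"
  define h where "h = height D"
  define base where "base l = C l (il l) (il l)" for l
  define P where "P l i = gsrc G ` (C l i (il l) \<inter> grng G -` A)" for l i
  have ms: "\<And>l. l \<in> L1 \<Longrightarrow> compact_open_multisection G (F l) (C l) \<and> il l \<in> F l"
    using ns_ms[OF gp ns] by (simp add: L1_def F_def C_def il_def)
  have finF: "\<And>l. l \<in> L1 \<Longrightarrow> finite (F l)" using ms by (simp add: compact_open_multisection_def)
  have finL1: "finite L1" by (simp add: L1_def)
  have pr: "prob_space \<mu>" and sp: "space \<mu> = units G" and st: "sets \<mu> = sets (restrict_space borel (units G))"
    and inv: "\<And>B. bisection G B \<Longrightarrow> emeasure \<mu> (gsrc G ` B) = emeasure \<mu> (grng G ` B)"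
    using \<mu> by (auto simp: inv_measures_def)
  have fm: "finite_measure \<mu>" using pr by (simp add: prob_space_def)
  have mopen: "V \<in> sets \<mu>" if "open V" "V \<subseteq> units G" for V
  proof -
    have "units G \<inter> V \<in> sets \<mu>" unfolding st sets_restrict_space using that by auto
    then show ?thesis using that by (simp add: Int_absorb1)
  qed
  have Copen: "open (C l i j)" if "l \<in> L1" "i \<in> F l" "j \<in> F l" for l i j
    using ms_bis[OF gp ms[OF that(1), THEN conjunct1] that(2,3)] by (simp add: bisection_def)
  have lev_units: "C l i i \<subseteq> units G" if "l \<in> L1" "i \<in> F l" for l i
    using ms_units[OF gp ms[OF that(1), THEN conjunct1] that(2)] .
  have rA: "open (grng G -` A)" using A(2) ag_cont_r[OF ag] by (rule open_vimage)
  have Pbase: "P l i \<subseteq> base l" if "l \<in> L1" "i \<in> F l" for l i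
    using ms_s[OF gp ms[OF that(1), THEN conjunct1] that(2) ms[OF that(1), THEN conjunct2]]
    by (auto simp: P_def base_def)
  have baseU: "base l \<subseteq> units G" if "l \<in> L1" for l
    using lev_units[OF that ms[OF that, THEN conjunct2]] by (simp add: base_def)
  have Psets: "P l i \<in> sets \<mu>" if "l \<in> L1" "i \<in> F l" for l i
  proof (rule mopen)
    show "open (P l i)" unfolding P_def
      by (rule s_open[OF ag]) (use Copen[OF that ms[OF that(1), THEN conjunct2]] rA in auto)
    show "P l i \<subseteq> units G" using Pbase[OF that] baseU[OF that(1)] by blast
  qed
  have basesets: "base l \<in> sets \<mu>" if "l \<in> L1" for l
    using mopen[OF _ baseU[OF that]] Copen[OF that ms[OF that, THEN conjunct2] ms[OF that, THEN conjunct2]]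
    by (simp add: base_def)
  have ALsets: "A \<inter> C l i i \<in> sets \<mu>" if "l \<in> L1" "i \<in> F l" for l i
    using mopen[of "A \<inter> C l i i"] Copen[OF that that(2)] A lev_units[OF that] by auto
  have PA: "measure \<mu> (P l i) = measure \<mu> (A \<inter> C l i i)" if li: "l \<in> L1" "i \<in> F l" for l i
  proof -
    have msl: "compact_open_multisection G (F l) (C l)" and ill: "il l \<in> F l" using ms[OF li(1)] by auto
    define B where "B = C l i (il l) \<inter> grng G -` A"
    have bis: "bisection G (C l i (il l))" using ms_bis[OF gp msl li(2) ill] by blast
    have "bisection G B" using bis rA unfolding B_def bisection_def by (auto intro: inj_on_subset)
    then have e: "emeasure \<mu> (gsrc G ` B) = emeasure \<mu> (grng G ` B)" by (rule inv)
    have "grng G ` B = A \<inter> C l i i"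
    proof
      show "grng G ` B \<subseteq> A \<inter> C l i i" using ms_r[OF gp msl li(2) ill] by (auto simp: B_def)
      show "A \<inter> C l i i \<subseteq> grng G ` B"
      proof
        fix v assume v: "v \<in> A \<inter> C l i i"
        then obtain x where "x \<in> C l i (il l)" "grng G x = v" using ms_r_ex[OF gp msl li(2) ill] by blast
        then show "v \<in> grng G ` B" using v unfolding B_def by blast
      qed
    qed
    then have "emeasure \<mu> (P l i) = emeasure \<mu> (A \<inter> C l i i)" using e by (simp add: P_def B_def)
    then show ?thesis unfolding finite_measure.emeasure_eq_measure[OF fm] by simp
  qed
  have tower: "(\<Sum>i\<in>F l. measure \<mu> (P l i)) \<le> real (card (F l)) * s * measure \<mu> (base l)" if l: "l \<in> L1" for l
  proof -
    have intP: "integrable \<mu> (indicator (P l i) :: 'a \<Rightarrow> real)" if "i \<in> F l" for i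
      by (rule integrable_real_indicator) (use Psets[OF l that] finite_measure.emeasure_finite[OF fm] in \<open>auto simp: top.not_eq_extremum\<close>)
    have intB: "integrable \<mu> (indicator (base l) :: 'a \<Rightarrow> real)"
      by (rule integrable_real_indicator) (use basesets[OF l] finite_measure.emeasure_finite[OF fm] in \<open>auto simp: top.not_eq_extremum\<close>)
    have "(\<Sum>i\<in>F l. measure \<mu> (P l i)) = (\<Sum>i\<in>F l. integral\<^sup>L \<mu> (indicator (P l i)))"
    proof (rule sum.cong[OF refl])
      fix i assume i: "i \<in> F l"
      have "P l i \<inter> space \<mu> = P l i" using Pbase[OF l i] baseU[OF l] sp by blast
      then show "measure \<mu> (P l i) = integral\<^sup>L \<mu> (indicator (P l i))"
        by (simp add: Bochner_Integration.integral_indicator)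
    qed
    also have "\<dots> = integral\<^sup>L \<mu> (\<lambda>x. \<Sum>i\<in>F l. indicator (P l i) x)"
      by (rule Bochner_Integration.integral_sum[symmetric]) (rule intP)
    also have "\<dots> \<le> integral\<^sup>L \<mu> (\<lambda>x. real (card (F l)) * s * indicator (base l) x)"
    proof (rule integral_mono)
      show "integrable \<mu> (\<lambda>x. \<Sum>i\<in>F l. indicator (P l i) x :: real)"
        by (rule Bochner_Integration.integrable_sum) (rule intP)
      show "integrable \<mu> (\<lambda>x. real (card (F l)) * s * indicator (base l) x)"
        by (rule integrable_mult_right) (rule intB)
      fix x assume "x \<in> space \<mu>"
      show "(\<Sum>i\<in>F l. indicator (P l i) x :: real) \<le> real (card (F l)) * s * indicator (base l) x"
      proof (cases "x \<in> base l")
        case True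
        have xu: "x \<in> units G" using True baseU[OF l] by blast
        have lc1: "card (fibre G (nd_set D) x) = card (F l)"
          using lower_count(1)[OF gp ns l[unfolded L1_def] True[unfolded base_def C_def il_def]] by (simp add: F_def)
        have lc2: "(\<Sum>\<gamma>\<in>fibre G (nd_set D) x. indicator A (grng G \<gamma>) :: real) = (\<Sum>i\<in>F l. indicator (P l i) x)"
          using lower_count(2)[OF gp ns l[unfolded L1_def] True[unfolded base_def C_def il_def], of A]
          by (simp add: F_def P_def C_def il_def)
        have cpos: "card (F l) > 0" using fibre_card_pos[OF gp ns xu] lc1 by simp
        have "dens_avg G D A x = (\<Sum>i\<in>F l. indicator (P l i) x) / real (card (F l))"
          unfolding dens_avg_def lc1 lc2 ..
        then have "(\<Sum>i\<in>F l. indicator (P l i) x) = real (card (F l)) * dens_avg G D A x"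
          using cpos by simp
        also have "\<dots> \<le> real (card (F l)) * s" using s[OF xu] by (simp add: mult_left_mono)
        finally show ?thesis using True by simp
      next
        case False
        then have "\<And>i. i \<in> F l \<Longrightarrow> x \<notin> P l i" using Pbase[OF l] by blast
        then show ?thesis using False by simp
      qed
    qed
    also have "\<dots> = real (card (F l)) * s * measure \<mu> (base l)"
    proof -
      have "base l \<inter> space \<mu> = base l" using baseU[OF l] sp by blast
      then show ?thesis by (simp add: Bochner_Integration.integral_indicator)
    qed
    finally show ?thesis .
  qed
  have L1ne: "L1 \<noteq> {}"
  proof -
    have "gsrc G undefined \<in> units G" by (simp add: units_def)
    then show ?thesis using ns_units[OF gp ns] by (auto simp: L1_def)
  qed
  have hmin: "h \<in> (\<lambda>l. card (F l)) ` L1" unfolding h_def height_def F_def L1_def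
    by (rule Min_in) (use L1ne in \<open>auto simp: L1_def\<close>)
  have hpos: "h > 0"
  proof -
    obtain l where l: "l \<in> L1" "h = card (F l)" using hmin by blast
    then show ?thesis using finF[OF l(1)] ms[OF l(1)] card_gt_0_iff by blast
  qed
  have chl: "card (F l) \<le> N * h" if "l \<in> L1" for l
    using ch that by (simp add: controlled_height_def F_def L1_def h_def)
  have sumbase: "(\<Sum>l\<in>L1. measure \<mu> (base l)) = 1"
  proof -
    have "(\<Union>l\<in>L1. base l) = units G" using ns_units[OF gp ns] by (simp add: base_def L1_def C_def il_def)
    moreover have "disjoint_family_on base L1"
      unfolding disjoint_family_on_def using ns_disj[OF gp ns] by (simp add: base_def L1_def C_def il_def)
    ultimately have "measure \<mu> (units G) = (\<Sum>l\<in>L1. measure \<mu> (base l))"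
      using finite_measure.finite_measure_finite_Union[OF fm finL1, of base] basesets by auto
    moreover have "measure \<mu> (units G) = 1" using prob_space.prob_space[OF pr] sp by simp
    ultimately show ?thesis by simp
  qed
  have upper: "(\<Sum>l\<in>L1. \<Sum>i\<in>F l. measure \<mu> (A \<inter> C l i i)) \<le> real N * real h * s"
  proof -
    have "(\<Sum>l\<in>L1. \<Sum>i\<in>F l. measure \<mu> (A \<inter> C l i i)) = (\<Sum>l\<in>L1. \<Sum>i\<in>F l. measure \<mu> (P l i))"
      using PA by simp
    also have "\<dots> \<le> (\<Sum>l\<in>L1. real (card (F l)) * s * measure \<mu> (base l))"
      by (rule sum_mono) (rule tower)
    also have "\<dots> \<le> (\<Sum>l\<in>L1. real N * real h * s * measure \<mu> (base l))"
    proof (rule sum_mono)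
      fix l assume l: "l \<in> L1"
      have "real (card (F l)) \<le> real N * real h" using chl[OF l] by (metis of_nat_le_iff of_nat_mult)
      then show "real (card (F l)) * s * measure \<mu> (base l) \<le> real N * real h * s * measure \<mu> (base l)"
        using s0 by (intro mult_right_mono) auto
    qed
    also have "\<dots> = real N * real h * s" using sumbase by (simp add: sum_distrib_left[symmetric])
    finally show ?thesis .
  qed
  obtain f where f0: "(\<forall>l\<in>{1..nd_m D}. inj_on (f l) {0..<height D} \<and> f l ` {0..<height D} \<subseteq> nd_F D l
        \<and> f l 0 = nd_i D l) \<and>
     (\<forall>k<height D. inf_measure G (\<Union>l\<in>{1..nd_m D}. nd_C D l (f l k) (f l k)) \<ge> ereal (1 - \<epsilon>)) \<and>
     (\<exists>L \<subseteq> {1..nd_m D}.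
        inf_measure G (\<Union>l\<in>L. nd_C D l (nd_i D l) (nd_i D l)) > ereal (1 - \<epsilon>) \<and>
        (\<forall>k<height D. \<exists>c :: nat \<Rightarrow> nat. (\<forall>l\<in>L. c l < M) \<and>
           (\<forall>l\<in>L. \<forall>l'\<in>L. l \<noteq> l' \<and> c l = c l' \<longrightarrow>
              nd_C D l (f l k) (f l k) \<inter> nd_C D l' (f l' k) (f l' k) = {})))"
    using good unfolding good_def by (elim exE)
  have finj: "inj_on (f l) {0..<h}" and fF: "f l ` {0..<h} \<subseteq> F l" if "l \<in> L1" for l
    using f0 that by (auto simp: L1_def h_def F_def)
  have fcov: "ereal (1 - \<epsilon>) \<le> inf_measure G (\<Union>l\<in>L1. C l (f l k) (f l k))" if "k < h" for k
    using f0 that by (simp add: L1_def h_def C_def)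
  have fkF: "f l k \<in> F l" if "l \<in> L1" "k < h" for l k
  proof -
    have "k \<in> {0..<h}" using that by simp
    then show "f l k \<in> F l" using fF[OF that(1)] by blast
  qed
  define U where "U k = (\<Union>l\<in>L1. C l (f l k) (f l k))" for k
  have Usets: "U k \<in> sets \<mu>" if "k < h" for k
  proof (rule mopen)
    have fk: "\<And>l. l \<in> L1 \<Longrightarrow> f l k \<in> F l"
    proof -
      fix l assume l: "l \<in> L1"
      have "k \<in> {0..<h}" using that by simp
      then show "f l k \<in> F l" using fF[OF l] by blast
    qed
    then show "open (U k)" unfolding U_def using Copen by auto
    show "U k \<subseteq> units G" unfolding U_def
    proof (rule UN_least)
      fix l assume l: "l \<in> L1"
      show "C l (f l k) (f l k) \<subseteq> units G" using lev_units[OF l fk[OF l]] .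
    qed
  qed
  have stepk: "measure \<mu> A - \<epsilon> \<le> (\<Sum>l\<in>L1. measure \<mu> (A \<inter> C l (f l k) (f l k)))" if k: "k < h" for k
  proof -
    have "ereal (measure \<mu> (U k)) \<ge> ereal (1 - \<epsilon>)"
      using fcov[OF k] INF_lower[OF \<mu>, of "\<lambda>\<mu>. ereal (measure \<mu> (U k))"]
      unfolding inf_measure_def U_def by (meson order_trans)
    then have Uk: "measure \<mu> (U k) \<ge> 1 - \<epsilon>" by simp
    have Asets: "A \<in> sets \<mu>" using mopen A by blast
    have spsets: "units G \<in> sets \<mu>" using sets.top[of \<mu>] sp by simp
    have "measure \<mu> (units G - U k) = measure \<mu> (units G) - measure \<mu> (U k)"
      by (rule finite_measure.finite_measure_Diff[OF fm spsets Usets[OF k]])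
         (use Usets[OF k] sets.sets_into_space[of "U k" \<mu>] sp in simp)
    also have "measure \<mu> (units G) = 1" using prob_space.prob_space[OF pr] sp by simp
    finally have d: "measure \<mu> (units G - U k) \<le> \<epsilon>" using Uk by simp
    have "measure \<mu> A \<le> measure \<mu> ((A \<inter> U k) \<union> (units G - U k))"
      by (rule finite_measure.finite_measure_mono[OF fm]) (use A Asets Usets[OF k] spsets in auto)
    also have "\<dots> \<le> measure \<mu> (A \<inter> U k) + measure \<mu> (units G - U k)"
      by (rule measure_Un_le) (use Asets Usets[OF k] spsets in auto)
    finally have 1: "measure \<mu> A - \<epsilon> \<le> measure \<mu> (A \<inter> U k)" using d by simp
    have "A \<inter> U k = (\<Union>l\<in>L1. A \<inter> C l (f l k) (f l k))" by (auto simp: U_def)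
    moreover have "\<And>l. l \<in> L1 \<Longrightarrow> A \<inter> C l (f l k) (f l k) \<in> sets \<mu>"
      using ALsets fkF k by blast
    ultimately have "measure \<mu> (A \<inter> U k) \<le> (\<Sum>l\<in>L1. measure \<mu> (A \<inter> C l (f l k) (f l k)))"
      using measure_UNION_le[OF finL1, of "\<lambda>l. A \<inter> C l (f l k) (f l k)" \<mu>] by simp
    with 1 show ?thesis by simp
  qed
  have "real h * (measure \<mu> A - \<epsilon>) = (\<Sum>k\<in>{0..<h}. measure \<mu> A - \<epsilon>)" by simp
  also have "\<dots> \<le> (\<Sum>k\<in>{0..<h}. \<Sum>l\<in>L1. measure \<mu> (A \<inter> C l (f l k) (f l k)))"
    by (rule sum_mono) (use stepk in auto)
  also have "\<dots> = (\<Sum>l\<in>L1. \<Sum>k\<in>{0..<h}. measure \<mu> (A \<inter> C l (f l k) (f l k)))"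
    by (rule sum.swap)
  also have "\<dots> \<le> (\<Sum>l\<in>L1. \<Sum>i\<in>F l. measure \<mu> (A \<inter> C l i i))"
  proof (rule sum_mono)
    fix l assume l: "l \<in> L1"
    have "(\<Sum>k\<in>{0..<h}. measure \<mu> (A \<inter> C l (f l k) (f l k))) = (\<Sum>i\<in>f l ` {0..<h}. measure \<mu> (A \<inter> C l i i))"
      using sum.reindex[OF finj[OF l], of "\<lambda>i. measure \<mu> (A \<inter> C l i i)"] by simp
    also have "\<dots> \<le> (\<Sum>i\<in>F l. measure \<mu> (A \<inter> C l i i))"
      by (rule sum_mono2[OF finF[OF l] fF[OF l]]) simp
    finally show "(\<Sum>k\<in>{0..<h}. measure \<mu> (A \<inter> C l (f l k) (f l k))) \<le> (\<Sum>i\<in>F l. measure \<mu> (A \<inter> C l i i))" .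
  qed
  also have "\<dots> \<le> real N * real h * s" by (rule upper)
  finally have "real h * (measure \<mu> A - \<epsilon>) \<le> real h * (real N * s)" by (simp add: algebra_simps)
  then have "measure \<mu> A - \<epsilon> \<le> real N * s" using hpos by simp
  then show ?thesis by simp
qed

end

theorem mainTheorem14:
  fixes G :: "('a::t2_space, 'b) groupoid_scheme"
    and M N :: nat and eps :: "nat \<Rightarrow> real"
    and S :: "nat \<Rightarrow> 'a normal_data" and A :: "'a set"
  assumes "ample_groupoid G"
    and "M > 0" and "N > 0"
    and "decseq eps" and "\<forall>n. eps n > 0" and "eps \<longlonglongrightarrow> 0"
    and "folner G S"
    and "\<forall>n. good G M (eps n) (S n) \<and> controlled_height N (S n)"
    and "A \<subseteq> units G"
    and "openin (top_of_set (units G)) A" and "closedin (top_of_set (units G)) A"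
  shows "ereal (1 / real N) * sup_measure G A \<le> lower_density G S A
       \<and> lower_density G S A \<le> upper_density G S A
       \<and> upper_density G S A \<le> sup_measure G A
       \<and> (N = 1 \<longrightarrow> sup_measure G A = lower_density G S A
                    \<and> sup_measure G A = upper_density G S A)"
proof -
  note ag = assms(1)
  have gp: "is_groupoid G" by (rule ag_gp[OF ag])
  have Npos: "N > 0" by fact
  have fol: "folner G S" by fact
  have ns: "\<And>n. normal_set G (S n)" using fol by (simp add: folner_def)
  have gd: "\<And>n. good G M (eps n) (S n)" and ch: "\<And>n. controlled_height N (S n)" using assms(8) by auto
  have Au: "A \<subseteq> units G" by fact
  have Aopen: "open A" using assms(10) units_open[OF ag] by (rule openin_open_trans)
  have Acomp: "compact A" using ag_cunits[OF ag] assms(11) by (rule closedin_compact)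
  define ds where "ds n = dens_sup G (S n) A" for n
  have fin: "\<And>n u. finite (fibre G (nd_set (S n)) u)" using fibre_finite[OF gp ns] by blast
  have ds0: "0 \<le> ds n" for n unfolding ds_def dens_sup_def by (rule Sup_upper) simp
  have ds1: "ds n \<le> 1" for n unfolding ds_def dens_sup_def
    by (rule Sup_least) (use dens_avg_bounds(2)[OF fin] in auto)
  define s where "s n = real_of_ereal (ds n)" for n
  have dss: "ds n = ereal (s n)" for n using ds0[of n] ds1[of n] unfolding s_def
    by (cases "ds n") auto
  have s0: "0 \<le> s n" for n using ds0[of n] dss[of n] by simp
  have sle: "dens_avg G (S n) A u \<le> s n" if "u \<in> units G" for n u
  proof -
    have "ereal (dens_avg G (S n) A u) \<le> ds n" unfolding ds_def dens_sup_def
      by (rule Sup_upper) (use that in auto)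
    then show ?thesis using dss[of n] by simp
  qed
  have each: "measure \<mu> A \<le> real N * s n + eps n" if "\<mu> \<in> inv_measures G" for \<mu> n
    by (rule lower_each[OF ag ns gd ch that Au Aopen sle s0])
  have lowmu: "ereal (measure \<mu> A / real N) \<le> liminf ds" if \<mu>: "\<mu> \<in> inv_measures G" for \<mu>
  proof -
    have lim: "(\<lambda>n. ereal ((measure \<mu> A - eps n) / real N)) \<longlonglongrightarrow> ereal (measure \<mu> A / real N)"
    proof -
      have "(\<lambda>n. (measure \<mu> A - eps n) / real N) \<longlonglongrightarrow> (measure \<mu> A - 0) / real N"
        by (intro tendsto_intros assms(6)) (use Npos in simp)
      then show ?thesis by (simp add: tendsto_ereal)
    qed
    have "ereal (measure \<mu> A / real N) = liminf (\<lambda>n. ereal ((measure \<mu> A - eps n) / real N))"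
      by (rule lim_imp_Liminf[symmetric]) (use lim in auto)
    also have "\<dots> \<le> liminf ds"
    proof (rule Liminf_mono, rule always_eventually, rule allI)
      fix n
      have "(measure \<mu> A - eps n) / real N \<le> s n"
        using each[OF \<mu>, of n] Npos by (simp add: divide_le_eq algebra_simps)
      then show "ereal ((measure \<mu> A - eps n) / real N) \<le> ds n" using dss[of n] by simp
    qed
    finally show ?thesis .
  qed
  have lim0: "0 \<le> liminf ds" by (rule Liminf_bounded) (use ds0 in auto)
  have smle: "sup_measure G A \<le> ereal (real N) * liminf ds"
    unfolding sup_measure_def
  proof (rule Sup_least)
    fix x assume "x \<in> insert 0 ((\<lambda>\<mu>. ereal (measure \<mu> A)) ` inv_measures G)"
    then consider "x = 0" | \<mu> where "\<mu> \<in> inv_measures G" "x = ereal (measure \<mu> A)" by blast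
    then show "x \<le> ereal (real N) * liminf ds"
    proof cases
      case 1 then show ?thesis using lim0 by simp
    next
      case 2
      have "x = ereal (real N) * ereal (measure \<mu> A / real N)" using 2(2) Npos by simp
      also have "\<dots> \<le> ereal (real N) * liminf ds"
        by (rule ereal_mult_left_mono[OF lowmu[OF 2(1)]]) simp
      finally show ?thesis .
    qed
  qed
  have low: "ereal (1 / real N) * sup_measure G A \<le> lower_density G S A"
  proof -
    have "ereal (1 / real N) * sup_measure G A \<le> ereal (1 / real N) * (ereal (real N) * liminf ds)"
      by (rule ereal_mult_left_mono[OF smle]) simp
    also have "\<dots> = (ereal (1 / real N) * ereal (real N)) * liminf ds" by (rule mult.assoc[symmetric])
    also have "ereal (1 / real N) * ereal (real N) = 1" using Npos by simp
    finally show ?thesis by (simp add: lower_density_def ds_def)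
  qed
  have mid: "lower_density G S A \<le> upper_density G S A"
    unfolding lower_density_def upper_density_def by (rule Liminf_le_Limsup) simp
  have up: "upper_density G S A \<le> sup_measure G A" by (rule upper[OF ag fol Au Acomp Aopen])
  have n1: "sup_measure G A = lower_density G S A \<and> sup_measure G A = upper_density G S A" if "N = 1"
  proof -
    have a: "sup_measure G A \<le> lower_density G S A" using low that by (simp add: one_ereal_def[symmetric])
    show ?thesis using antisym[OF a order_trans[OF mid up]] antisym[OF order_trans[OF a mid] up] by blast
  qed
  show ?thesis using low mid up n1 by blast
qed

end
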